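(* Let $\widehat{G}$ be a subgroup of $\widehat{\operatorname{PC}^{\bowtie}}$ containing ${\mathfrak S}_{\mathrm{fin}}$ and let $G$ be its image in $\operatorname{PC}^{\bowtie}=\widehat{\operatorname{PC}^{\bowtie}}/{\mathfrak S}_{\mathrm{fin}}$. Then the map $\widehat{G}_{\mathrm{ab}}\to G_{\mathrm{ab}}$ induced by the projection extends to an isomorphism $\widehat{G}_{\mathrm{ab}}\cong G_{\mathrm{ab}}\times\mathbb{Z}/2\mathbb{Z}$. Moreover $D(\widehat{G})=\operatorname{Ker}(\varepsilon)\cap\widehat{D(G)}$, and this is a subgroup of index $2$ in $\widehat{D(G)}$. In particular, if $G$ is perfect then $\widehat{G}_{\mathrm{ab}}\cong\mathbb{Z}/2\mathbb{Z}$.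
   Context: $X=[0,1[$. $\widehat{\operatorname{PC}^{\bowtie}}$ is the group of bijections $X\to X$ continuous outside a finite subset; ${\mathfrak S}_{\mathrm{fin}}$ is its normal subgroup of finitely supported permutations, with classical signature $\operatorname{sgn}:{\mathfrak S}_{\mathrm{fin}}\to\mathbb{Z}/2\mathbb{Z}$. For a group $H$, $D(H)$ is its derived subgroup and $H_{\mathrm{ab}}=H/D(H)$. $\widehat{D(G)}$ denotes the inverse image of $D(G)$ in $\widehat{\operatorname{PC}^{\bowtie}}$. The homomorphism $\varepsilon:\widehat{\operatorname{PC}^{\bowtie}}\to\mathbb{Z}/2\mathbb{Z}$ is defined as follows. For $h\in\widehat{\operatorname{PC}^{\bowtie}}$, a partition associated with $h$ is a finite partition $\mathcal P=\{I_1,\dots,I_n\}$ of $X$ into intervals $I_j=[\alpha_j,b_j[$ such that $h$ is continuous on $I_j^\circ=]\alpha_j,b_j[$ for each $j$ (so $h$ is strictly monotone there and $h(I_j^\circ)$ is an open interval). Let $\beta_j$ be the left endpoint of $h(I_j^\circ)$; $\{h(\alpha_j)\}=\{\beta_j\}$, and $\sigma_{(h,\mathcal P)}\in{\mathfrak S}_{\mathrm{fin}}$ sends $h(\alpha_j)$ to $\beta_j$ for each $j$ and fixes all other points. $R(h,\mathcal P)$ is the number of $j$ with $h$ decreasing on $I_j^\circ$, and $\varepsilon(h,\mathcal P)=R(h,\mathcal P)+\operatorname{sgn}(\sigma_{(h,\mathcal P)})\bmod 2$. There is a unique associated partition $\mathcal P^{\min}_h$ with the fewest intervals, and $\varepsilon(h):=\varepsilon(h,\mathcal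 P^{\min}_h)$; it is a group homomorphism extending $\operatorname{sgn}$. *)

theory Defs
  imports "HOL-Analysis.Analysis" "HOL-Algebra.Algebra" "HOL-Combinatorics.Permutations"
begin

text \<open>The interval X = [0,1[. Maps X -> X are represented by functions real => real
  that are the identity outside X (so that composition and identity behave as in the group).\<close>

definition Xint :: "real set" where
  "Xint = {0..<1}"

text \<open>The group hat(PC) of bijections of X continuous outside a finite subset.\<close>

definition PC_carrier :: "(real \<Rightarrow> real) set" where
  "PC_carrier = {f. bij_betw f Xint Xint \<and> (\<forall>x. x \<notin> Xint \<longrightarrow> f x = x) \<and>
      (\<exists>F. finite F \<and> (\<forall>x \<in> Xint - F. continuous (at x within Xint) f))}"

definition PC :: "(real \<Rightarrow> real) monoid" where
  "PC = \<lparr>carrier = PC_carrier, monoid.mult = (\<circ>), one = id\<rparr>"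

definition Sfin :: "(real \<Rightarrow> real) set" where
  "Sfin = {f. bij_betw f Xint Xint \<and> (\<forall>x. x \<notin> Xint \<longrightarrow> f x = x) \<and> finite {x. f x \<noteq> x}}"

abbreviation Z2 :: "int monoid" where
  "Z2 \<equiv> integer_mod_group 2"

definition sgn2 :: "(real \<Rightarrow> real) \<Rightarrow> int" where
  "sgn2 p = (if evenperm p then 0 else 1)"

text \<open>A finite partition of X into intervals [alpha_j, b_j[ is encoded by the finite set B
  of its left endpoints alpha_j (containing 0); the right endpoint of the interval starting
  at a is the next point of B after a, or 1.\<close>

definition nextpt :: "real set \<Rightarrow> real \<Rightarrow> real" where
  "nextpt B a = Min ({b \<in> B. a < b} \<union> {1})"

definition assoc_partition :: "(real \<Rightarrow> real) \<Rightarrow> real set \<Rightarrow> bool" where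
  "assoc_partition h B \<longleftrightarrow> finite B \<and> 0 \<in> B \<and> B \<subseteq> Xint \<and>
     (\<forall>a \<in> B. continuous_on {a<..<nextpt B a} h)"

definition betapt :: "(real \<Rightarrow> real) \<Rightarrow> real set \<Rightarrow> real \<Rightarrow> real" where
  "betapt h B a = Inf (h ` {a<..<nextpt B a})"

definition sigma_part :: "(real \<Rightarrow> real) \<Rightarrow> real set \<Rightarrow> real \<Rightarrow> real" where
  "sigma_part h B = (\<lambda>y. if y \<in> h ` B then betapt h B (inv_into B h y) else y)"

definition Rcount :: "(real \<Rightarrow> real) \<Rightarrow> real set \<Rightarrow> nat" where
  "Rcount h B = card {a \<in> B. strict_antimono_on {a<..<nextpt B a} h}"

definition eps_part :: "(real \<Rightarrow> real) \<Rightarrow> real set \<Rightarrow> int" where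
  "eps_part h B = (int (Rcount h B) + sgn2 (sigma_part h B)) mod 2"

definition min_partition :: "(real \<Rightarrow> real) \<Rightarrow> real set" where
  "min_partition h = (THE B. assoc_partition h B \<and>
      (\<forall>C. assoc_partition h C \<longrightarrow> card B \<le> card C))"

definition epsilon :: "(real \<Rightarrow> real) \<Rightarrow> int" where
  "epsilon h = eps_part h (min_partition h)"

definition image_grp :: "(real \<Rightarrow> real) set \<Rightarrow> (real \<Rightarrow> real) set monoid" where
  "image_grp Gh = (PC Mod Sfin)\<lparr>carrier := (\<lambda>g. Sfin #>\<^bsub>PC\<^esub> g) ` Gh\<rparr>"

definition hat_derived :: "(real \<Rightarrow> real) set \<Rightarrow> (real \<Rightarrow> real) set" where
  "hat_derived Gh = {g \<in> carrier PC. Sfin #>\<^bsub>PC\<^esub> g \<in> derived (image_grp Gh) (carrier (image_grp Gh))}"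

end

theory Submission
  imports Defs
begin

lemma X_simps: "x \<in> Xint \<longleftrightarrow> 0 \<le> x \<and> x < 1"
  by (simp add: Xint_def)

lemma nextpt_props:
  assumes "finite B" "a \<in> B" "B \<subseteq> Xint"
  shows "a < nextpt B a" "nextpt B a \<le> 1" "nextpt B a \<in> B \<union> {1}"
        "\<And>b. b \<in> B \<Longrightarrow> a < b \<Longrightarrow> nextpt B a \<le> b"
proof -
  let ?S = "{b \<in> B. a < b} \<union> {1}"
  have fin: "finite ?S" using assms(1) by auto
  have ne: "?S \<noteq> {}" by auto
  have a1: "a < 1" using assms by (auto simp: X_simps)
  have "nextpt B a \<in> ?S" unfolding nextpt_def using Min_in[OF fin ne] .
  then show "a < nextpt B a" "nextpt B a \<in> B \<union> {1}" using a1 by auto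
  show "nextpt B a \<le> 1" unfolding nextpt_def using Min_le[OF fin] by auto
  show "\<And>b. b \<in> B \<Longrightarrow> a < b \<Longrightarrow> nextpt B a \<le> b" unfolding nextpt_def using Min_le[OF fin] by auto
qed

lemma nextpt_eqI:
  assumes "finite B" "m \<in> B \<union> {1}" "x < m" "\<And>b. b \<in> B \<Longrightarrow> x < b \<Longrightarrow> m \<le> b" "m \<le> 1"
  shows "nextpt B x = m"
  unfolding nextpt_def
  apply (rule Min_eqI)
  using assms by auto

lemma nextpt_cover:
  assumes "finite B" "0 \<in> B" "B \<subseteq> Xint" "x \<in> Xint" "x \<notin> B"
  shows "\<exists>a\<in>B. a < x \<and> x < nextpt B a"
proof -
  let ?T = "{b \<in> B. b < x}"
  have x0: "0 < x" using assms by (cases "x = 0") (auto simp: X_simps)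
  have fin: "finite ?T" "?T \<noteq> {}" using assms x0 by auto
  define a where "a = Max ?T"
  have aT: "a \<in> ?T" unfolding a_def using Max_in[OF fin] .
  have amax: "\<And>b. b \<in> ?T \<Longrightarrow> b \<le> a" unfolding a_def using Max_ge[OF fin(1)] by auto
  have "x < nextpt B a"
  proof (rule ccontr)
    assume "\<not> x < nextpt B a"
    hence le: "nextpt B a \<le> x" by simp
    have "nextpt B a \<in> B \<union> {1}" "a < nextpt B a"
      using nextpt_props[OF assms(1) _ assms(3)] aT by auto
    moreover have "x < 1" using assms by (auto simp: X_simps)
    ultimately have "nextpt B a \<in> B" using le by auto
    with le assms(5) have "nextpt B a \<in> ?T" by (cases "nextpt B a = x") auto
    hence "nextpt B a \<le> a" by (rule amax)
    with \<open>a < nextpt B a\<close> show False by simp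
  qed
  thus ?thesis using aT by blast
qed

lemma nextpt_disj:
  assumes "finite B" "B \<subseteq> Xint" "a \<in> B" "a' \<in> B" "a < x" "x < nextpt B a" "a' < x" "x < nextpt B a'"
  shows "a = a'"
proof (rule ccontr)
  assume "a \<noteq> a'"
  then consider "a < a'" | "a' < a" by linarith
  then show False
  proof cases
    case 1
    then have "nextpt B a \<le> a'" using nextpt_props(4)[OF assms(1,3,2) assms(4)] by simp
    then show False using assms by simp
  next
    case 2
    then have "nextpt B a' \<le> a" using nextpt_props(4)[OF assms(1,4,2) assms(3)] by simp
    then show False using assms by simp
  qed
qed

lemma nextpt_notin:
  assumes "finite B" "B \<subseteq> Xint" "a \<in> B" "a < x" "x < nextpt B a"
  shows "x \<notin> B" "x \<in> Xint"
proof -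
  show "x \<notin> B"
  proof
    assume "x \<in> B"
    then have "nextpt B a \<le> x" using nextpt_props(4)[OF assms(1,3,2)] assms(4) by blast
    then show False using assms(5) by simp
  qed
  have "0 \<le> a" using assms(2,3) by (auto simp: X_simps)
  moreover have "nextpt B a \<le> 1" using nextpt_props(2)[OF assms(1,3,2)] .
  ultimately show "x \<in> Xint" using assms(4,5) by (simp add: X_simps)
qed

lemma assoc_iff:
  "assoc_partition h B \<longleftrightarrow> finite B \<and> 0 \<in> B \<and> B \<subseteq> Xint \<and> (\<forall>x\<in>Xint - B. isCont h x)"
proof
  assume A: "assoc_partition h B"
  hence B: "finite B" "0 \<in> B" "B \<subseteq> Xint" by (auto simp: assoc_partition_def)
  have "isCont h x" if "x \<in> Xint - B" for x
  proof -
    have xx: "x \<in> Xint" "x \<notin> B" using that by auto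
    obtain a where a: "a \<in> B" "a < x" "x < nextpt B a" using nextpt_cover[OF B xx] by blast
    have "continuous_on {a<..<nextpt B a} h" using A a by (auto simp: assoc_partition_def)
    thus ?thesis using a continuous_on_eq_continuous_at[of "{a<..<nextpt B a}" h] by auto
  qed
  thus "finite B \<and> 0 \<in> B \<and> B \<subseteq> Xint \<and> (\<forall>x\<in>Xint - B. isCont h x)" using B by auto
next
  assume A: "finite B \<and> 0 \<in> B \<and> B \<subseteq> Xint \<and> (\<forall>x\<in>Xint - B. isCont h x)"
  show "assoc_partition h B" unfolding assoc_partition_def
  proof (intro conjI ballI)
    fix a assume a: "a \<in> B"
    show "continuous_on {a<..<nextpt B a} h"
    proof (rule continuous_at_imp_continuous_on, rule ballI)
      fix x assume x: "x \<in> {a<..<nextpt B a}"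
      have "x \<notin> B" "x \<in> Xint" using nextpt_notin[of B a x] A a x by auto
      then show "isCont h x" using A by blast
    qed
  next
    show "finite B" using A by blast
  next
    show "0 \<in> B" using A by blast
  next
    show "B \<subseteq> Xint" using A by blast
  qed
qed

lemma closed_inc:
  fixes f :: "real \<Rightarrow> real"
  assumes "c < d" "continuous_on {c..d} f" "inj_on f {c..d}" "f c < f d"
      "c \<le> x" "x < y" "y \<le> d"
  shows "f x < f y"
proof -
  have int: "f c < f t \<and> f t < f d" if "c < t" "t < d" for t
    using continuous_inj_imp_mono[OF that assms(2,3)] assms(4) by linarith
  show ?thesis
  proof (cases "x = c")
    case True
    then show ?thesis using int[of y] assms by (cases "y = d") auto
  next
    case False
    hence xc: "c < x" using assms by simp
    have fxd: "f x < f d" using int[OF xc] assms by simp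
    show ?thesis
    proof (cases "y = d")
      case True then show ?thesis using fxd by simp
    next
      case False
      hence yd: "y < d" using assms by simp
      have c2: "continuous_on {x..d} f" using continuous_on_subset[OF assms(2)] xc by auto
      have i2: "inj_on f {x..d}" using inj_on_subset[OF assms(3)] xc by auto
      show ?thesis using continuous_inj_imp_mono[OF assms(6) yd c2 i2] fxd by linarith
    qed
  qed
qed

lemma closed_dec:
  fixes f :: "real \<Rightarrow> real"
  assumes "c < d" "continuous_on {c..d} f" "inj_on f {c..d}" "f d < f c"
      "c \<le> x" "x < y" "y \<le> d"
  shows "f y < f x"
proof -
  have "(\<lambda>t. - f t) x < (\<lambda>t. - f t) y"
    apply (rule closed_inc[OF assms(1) _ _ _ assms(5,6,7)])
    using assms(2,3,4) by (auto intro: continuous_intros simp: inj_on_def)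
  thus ?thesis by simp
qed

lemma mono_or_anti:
  fixes h :: "real \<Rightarrow> real"
  assumes "continuous_on {u<..<v} h" "inj_on h {u<..<v}"
  shows "strict_mono_on {u<..<v} h \<or> strict_antimono_on {u<..<v} h"
proof (rule ccontr)
  assume "\<not> ?thesis"
  then obtain x y x' y' where xy: "x \<in> {u<..<v}" "y \<in> {u<..<v}" "x < y" "\<not> h x < h y"
      and xy': "x' \<in> {u<..<v}" "y' \<in> {u<..<v}" "x' < y'" "\<not> h y' < h x'"
    unfolding monotone_on_def by blast
  define c where "c = min x x'"
  define d where "d = max y y'"
  have cd: "c < d" using xy xy' unfolding c_def d_def by linarith
  have sub: "{c..d} \<subseteq> {u<..<v}" using xy xy' unfolding c_def d_def by auto
  have cont: "continuous_on {c..d} h" using continuous_on_subset[OF assms(1) sub] .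
  have inj: "inj_on h {c..d}" using inj_on_subset[OF assms(2) sub] .
  have "h c \<noteq> h d" using inj cd unfolding inj_on_def by (metis atLeastAtMost_iff less_eq_real_def less_irrefl)
  then consider "h c < h d" | "h d < h c" by linarith
  then show False
  proof cases
    case 1
    have "h x < h y" apply (rule closed_inc[OF cd cont inj 1]) using xy unfolding c_def d_def by auto
    then show False using xy by simp
  next
    case 2
    have "h y' < h x'" apply (rule closed_dec[OF cd cont inj 2]) using xy' unfolding c_def d_def by auto
    then show False using xy' by simp
  qed
qed

lemma image_open_interval:
  fixes h :: "real \<Rightarrow> real"
  assumes "u < v" "continuous_on {u<..<v} h" "inj_on h {u<..<v}"
      "bdd_below (h ` {u<..<v})" "bdd_above (h ` {u<..<v})"
  shows "h ` {u<..<v} = {Inf (h ` {u<..<v}) <..< Sup (h ` {u<..<v})}"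
proof -
  let ?I = "{u<..<v}"
  let ?S = "h ` ?I"
  have conn: "connected ?S" by (rule connected_continuous_image[OF assms(2)]) simp
  have ne: "?S \<noteq> {}" using assms(1) by auto
  have lower: "\<exists>z\<in>?S. z < y" and upper: "\<exists>z\<in>?S. y < z" if yS: "y \<in> ?S" for y
  proof -
    obtain x where x: "x \<in> ?I" "y = h x" using yS by blast
    define x1 where "x1 = (u + x) / 2"
    define x2 where "x2 = (x + v) / 2"
    have x12: "x1 \<in> ?I" "x2 \<in> ?I" "x1 < x" "x < x2" using x unfolding x1_def x2_def by auto
    from mono_or_anti[OF assms(2,3)]
    have "(h x1 < h x \<and> h x < h x2) \<or> (h x2 < h x \<and> h x < h x1)"
      using x12 x(1) unfolding monotone_on_def by blast
    then show "\<exists>z\<in>?S. z < y" "\<exists>z\<in>?S. y < z" using x12 x by blast+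
  qed
  show ?thesis
  proof
    show "?S \<subseteq> {Inf ?S<..<Sup ?S}"
    proof
      fix y assume y: "y \<in> ?S"
      obtain z1 where z1: "z1 \<in> ?S" "z1 < y" using lower[OF y] by blast
      obtain z2 where z2: "z2 \<in> ?S" "y < z2" using upper[OF y] by blast
      have "Inf ?S \<le> z1" using cInf_lower[OF z1(1) assms(4)] .
      moreover have "z2 \<le> Sup ?S" using cSup_upper[OF z2(1) assms(5)] .
      ultimately show "y \<in> {Inf ?S<..<Sup ?S}" using z1 z2 by simp
    qed
  next
    show "{Inf ?S<..<Sup ?S} \<subseteq> ?S"
    proof
      fix y assume y: "y \<in> {Inf ?S<..<Sup ?S}"
      obtain z1 where z1: "z1 \<in> ?S" "z1 < y" using y cInf_less_iff[OF ne assms(4)] by auto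
      obtain z2 where z2: "z2 \<in> ?S" "y < z2" using y less_cSup_iff[OF ne assms(5)] by auto
      show "y \<in> ?S" using connectedD_interval[OF conn z1(1) z2(1)] z1 z2 by simp
    qed
  qed
qed

definition Iv :: "real set \<Rightarrow> real \<Rightarrow> real set" where
  "Iv B a = {a<..<nextpt B a}"

definition Up :: "(real \<Rightarrow> real) \<Rightarrow> real set \<Rightarrow> real \<Rightarrow> real" where
  "Up h B a = Sup (h ` Iv B a)"

lemma PC_basic:
  assumes "h \<in> PC_carrier"
  shows "bij_betw h Xint Xint" "\<And>x. x \<notin> Xint \<Longrightarrow> h x = x" "inj_on h Xint" "h ` Xint = Xint"
  using assms unfolding PC_carrier_def bij_betw_def by auto

lemma assocD:
  assumes "assoc_partition h B"
  shows "finite B" "0 \<in> B" "B \<subseteq> Xint" "\<And>x. x \<in> Xint \<Longrightarrow> x \<notin> B \<Longrightarrow> isCont h x"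
  using assms unfolding assoc_iff by auto

lemma Iv_props:
  assumes "assoc_partition h B" "a \<in> B"
  shows "Iv B a \<subseteq> Xint" "Iv B a \<inter> B = {}" "a < nextpt B a" "Iv B a \<noteq> {}"
    "continuous_on (Iv B a) h"
proof -
  note B = assocD[OF assms(1)]
  show "Iv B a \<subseteq> Xint" using nextpt_notin[OF B(1) B(3) assms(2)] unfolding Iv_def by auto
  show "Iv B a \<inter> B = {}" using nextpt_notin[OF B(1) B(3) assms(2)] unfolding Iv_def by auto
  show an: "a < nextpt B a" using nextpt_props(1)[OF B(1) assms(2) B(3)] .
  then show "Iv B a \<noteq> {}" unfolding Iv_def by auto
  show "continuous_on (Iv B a) h" using assms(1,2) unfolding assoc_partition_def Iv_def by blast
qed

lemma Iv_disj:
  assumes "assoc_partition h B" "a \<in> B" "a' \<in> B" "x \<in> Iv B a" "x \<in> Iv B a'"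
  shows "a = a'"
  using nextpt_disj[OF assocD(1,3)[OF assms(1)] assms(2,3)] assms(4,5) unfolding Iv_def by auto

lemma Iv_cover:
  assumes "assoc_partition h B" "x \<in> Xint" "x \<notin> B"
  shows "\<exists>a\<in>B. x \<in> Iv B a"
  using nextpt_cover[OF assocD(1,2,3)[OF assms(1)] assms(2,3)] unfolding Iv_def by auto

lemma piece:
  assumes "h \<in> PC_carrier" "assoc_partition h B" "a \<in> B"
  shows "inj_on h (Iv B a)"
    "strict_mono_on (Iv B a) h \<or> strict_antimono_on (Iv B a) h"
    "h ` Iv B a = {betapt h B a <..< Up h B a}"
    "0 \<le> betapt h B a" "betapt h B a < Up h B a" "Up h B a \<le> 1"
    "h ` Iv B a \<subseteq> Xint"
proof -
  note I = Iv_props[OF assms(2,3)]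
  show inj: "inj_on h (Iv B a)" using inj_on_subset[OF PC_basic(3)[OF assms(1)] I(1)] .
  have cont: "continuous_on {a<..<nextpt B a} h" using I(5) unfolding Iv_def .
  have inj': "inj_on h {a<..<nextpt B a}" using inj unfolding Iv_def .
  show "strict_mono_on (Iv B a) h \<or> strict_antimono_on (Iv B a) h"
    using mono_or_anti[OF cont inj'] unfolding Iv_def .
  show sub: "h ` Iv B a \<subseteq> Xint" using I(1) PC_basic(4)[OF assms(1)] by blast
  have bb: "bdd_below (h ` {a<..<nextpt B a})" "bdd_above (h ` {a<..<nextpt B a})"
  proof -
    have "\<forall>y\<in>h ` {a<..<nextpt B a}. 0 \<le> y \<and> y \<le> 1" using sub unfolding Iv_def Xint_def by fastforce
    then show "bdd_below (h ` {a<..<nextpt B a})" "bdd_above (h ` {a<..<nextpt B a})"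
      unfolding bdd_below_def bdd_above_def by blast+
  qed
  show img: "h ` Iv B a = {betapt h B a <..< Up h B a}"
    using image_open_interval[OF I(3) cont inj' bb] unfolding betapt_def Up_def Iv_def by simp
  have ne: "h ` Iv B a \<noteq> {}" using I(4) by blast
  show "0 \<le> betapt h B a" unfolding betapt_def Iv_def[symmetric]
    apply (rule cInf_greatest[OF ne]) using sub by (auto simp: X_simps)
  show "Up h B a \<le> 1" unfolding Up_def
    apply (rule cSup_least[OF ne]) using sub by (auto simp: X_simps)
  show "betapt h B a < Up h B a" using ne img by auto
qed

lemma img_disj:
  assumes "h \<in> PC_carrier" "assoc_partition h B" "a \<in> B" "a' \<in> B" "y \<in> h ` Iv B a" "y \<in> h ` Iv B a'"
  shows "a = a'"
proof -
  obtain x x' where x: "x \<in> Iv B a" "y = h x" and x': "x' \<in> Iv B a'" "y = h x'" using assms(5,6) by blast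
  have "x = x'" using PC_basic(3)[OF assms(1)] Iv_props(1)[OF assms(2,3)] Iv_props(1)[OF assms(2,4)] x x'
    unfolding inj_on_def by blast
  thus ?thesis using Iv_disj[OF assms(2,3,4)] x x' by blast
qed

lemma betapt_in:
  assumes "h \<in> PC_carrier" "assoc_partition h B" "a \<in> B"
  shows "betapt h B a \<in> h ` B"
proof (rule ccontr)
  assume nin: "betapt h B a \<notin> h ` B"
  note P = piece[OF assms]
  let ?L = "betapt h B a"
  have "?L \<in> Xint" using P(4,5,6) by (simp add: X_simps)
  then obtain x where x: "x \<in> Xint" "h x = ?L" using PC_basic(4)[OF assms(1)] by (metis imageE)
  have xB: "x \<notin> B"
  proof
    assume "x \<in> B"
    then have "h x \<in> h ` B" by (rule imageI)
    with x nin show False by simp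
  qed
  have "\<exists>a'\<in>B. x \<in> Iv B a'" using Iv_cover[OF assms(2) x(1) xB] .
  then obtain a' where a': "a' \<in> B" "x \<in> Iv B a'" ..
  note P' = piece[OF assms(1,2) a'(1)]
  have "h x \<in> h ` Iv B a'" using a'(2) by (rule imageI)
  then have Lin: "?L \<in> {betapt h B a' <..< Up h B a'}" using P'(3) x(2) by simp
  define t where "t = (?L + min (Up h B a) (Up h B a')) / 2"
  have "t \<in> h ` Iv B a" "t \<in> h ` Iv B a'" using P(3,5) P'(3) Lin unfolding t_def by auto
  hence "a = a'" using img_disj[OF assms(1,2,3) a'(1)] by blast
  thus False using Lin by simp
qed

lemma Up_in:
  assumes "h \<in> PC_carrier" "assoc_partition h B" "a \<in> B" "Up h B a < 1"
  shows "Up h B a \<in> h ` B"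
proof (rule ccontr)
  assume nin: "Up h B a \<notin> h ` B"
  note P = piece[OF assms(1-3)]
  let ?U = "Up h B a"
  have "?U \<in> Xint" using P(4,5) assms(4) by (simp add: X_simps)
  then obtain x where x: "x \<in> Xint" "h x = ?U" using PC_basic(4)[OF assms(1)] by (metis imageE)
  have xB: "x \<notin> B"
  proof
    assume "x \<in> B"
    then have "h x \<in> h ` B" by (rule imageI)
    with x nin show False by simp
  qed
  have "\<exists>a'\<in>B. x \<in> Iv B a'" using Iv_cover[OF assms(2) x(1) xB] .
  then obtain a' where a': "a' \<in> B" "x \<in> Iv B a'" ..
  note P' = piece[OF assms(1,2) a'(1)]
  have "h x \<in> h ` Iv B a'" using a'(2) by (rule imageI)
  then have Uin: "?U \<in> {betapt h B a' <..< Up h B a'}" using P'(3) x(2) by simp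
  define t where "t = (max (betapt h B a) (betapt h B a') + ?U) / 2"
  have "t \<in> h ` Iv B a" "t \<in> h ` Iv B a'" using P(3,5) P'(3) Uin unfolding t_def by auto
  hence "a = a'" using img_disj[OF assms(1,2,3) a'(1)] by blast
  thus False using Uin by simp
qed

lemma betapt_inj:
  assumes "h \<in> PC_carrier" "assoc_partition h B"
  shows "inj_on (betapt h B) B"
proof (rule inj_onI)
  fix a a' assume a: "a \<in> B" "a' \<in> B" "betapt h B a = betapt h B a'"
  note P = piece[OF assms a(1)]
  note P' = piece[OF assms a(2)]
  define t where "t = (betapt h B a + min (Up h B a) (Up h B a')) / 2"
  have "t \<in> h ` Iv B a" "t \<in> h ` Iv B a'" using P(3,5) P'(3,5) a(3) unfolding t_def by auto
  thus "a = a'" using img_disj[OF assms a(1,2)] by blast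
qed

lemma h_inj_B:
  assumes "h \<in> PC_carrier" "assoc_partition h B"
  shows "inj_on h B"
  using inj_on_subset[OF PC_basic(3)[OF assms(1)] assocD(3)[OF assms(2)]] .

lemma betapt_image:
  assumes "h \<in> PC_carrier" "assoc_partition h B"
  shows "betapt h B ` B = h ` B"
proof (rule card_subset_eq)
  show "finite (h ` B)" using assocD(1)[OF assms(2)] by simp
  show "betapt h B ` B \<subseteq> h ` B" using betapt_in[OF assms] by blast
  show "card (betapt h B ` B) = card (h ` B)"
    using card_image[OF betapt_inj[OF assms]] card_image[OF h_inj_B[OF assms]] by simp
qed

lemma sigma_h:
  assumes "h \<in> PC_carrier" "assoc_partition h B" "b \<in> B"
  shows "sigma_part h B (h b) = betapt h B b"
  unfolding sigma_part_def using assms(3) inv_into_f_f[OF h_inj_B[OF assms(1,2)] assms(3)] by simp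

lemma sigma_out:
  assumes "y \<notin> h ` B"
  shows "sigma_part h B y = y"
  unfolding sigma_part_def using assms by simp

lemma sigma_permutes:
  assumes "h \<in> PC_carrier" "assoc_partition h B"
  shows "sigma_part h B permutes (h ` B)" "permutation (sigma_part h B)"
proof -
  have im: "sigma_part h B ` (h ` B) = h ` B"
  proof -
    have "sigma_part h B ` (h ` B) = betapt h B ` B"
      using sigma_h[OF assms] by (auto simp: image_iff)
    thus ?thesis using betapt_image[OF assms] by simp
  qed
  have inj: "inj_on (sigma_part h B) (h ` B)"
  proof (rule inj_onI)
    fix y y' assume "y \<in> h ` B" "y' \<in> h ` B" and eq: "sigma_part h B y = sigma_part h B y'"
    then obtain b b' where b: "b \<in> B" "y = h b" "b' \<in> B" "y' = h b'" by blast
    have "betapt h B b = betapt h B b'" using eq b sigma_h[OF assms] by simp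
    hence "b = b'" using betapt_inj[OF assms] b unfolding inj_on_def by blast
    thus "y = y'" using b by simp
  qed
  show p: "sigma_part h B permutes (h ` B)"
    by (rule bij_imp_permutes) (auto simp: bij_betw_def inj im sigma_out)
  show "permutation (sigma_part h B)"
    using permutation_permutes p assocD(1)[OF assms(2)] by blast
qed

lemma bdd_X:
  assumes "A \<subseteq> Xint"
  shows "bdd_below A" "bdd_above A"
proof -
  have "\<forall>y\<in>A. 0 \<le> y \<and> y \<le> 1" using assms unfolding Xint_def by fastforce
  then show "bdd_below A" "bdd_above A" unfolding bdd_below_def bdd_above_def by blast+
qed

lemma not_both:
  fixes h :: "real \<Rightarrow> real"
  assumes "u < v" "strict_mono_on {u<..<v} h"
  shows "\<not> strict_antimono_on {u<..<v} h"
proof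
  assume an: "strict_antimono_on {u<..<v} h"
  define x where "x = u + (v - u) / 3"
  define y where "y = u + 2 * (v - u) / 3"
  have xy: "x \<in> {u<..<v}" "y \<in> {u<..<v}" "x < y" using assms(1) unfolding x_def y_def by (auto simp: field_simps)
  have "h x < h y" using assms(2) xy unfolding monotone_on_def by blast
  moreover have "h y < h x" using an xy unfolding monotone_on_def by blast
  ultimately show False by simp
qed

lemma Inf_inc1:
  fixes h :: "real \<Rightarrow> real"
  assumes "a < c" "c < n" "strict_mono_on {a<..<n} h" "h ` {a<..<n} \<subseteq> Xint"
  shows "Inf (h ` {a<..<c}) = Inf (h ` {a<..<n})"
proof (rule antisym)
  have sub: "h ` {a<..<c} \<subseteq> h ` {a<..<n}" using assms by auto
  have ne1: "h ` {a<..<c} \<noteq> {}" using assms by auto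
  have bS: "bdd_below (h ` {a<..<n})" using bdd_X[OF assms(4)] by simp
  have bS1: "bdd_below (h ` {a<..<c})" using bdd_X[of "h ` {a<..<c}"] sub assms(4) by auto
  show "Inf (h ` {a<..<n}) \<le> Inf (h ` {a<..<c})" by (rule cInf_superset_mono[OF ne1 bS sub])
  show "Inf (h ` {a<..<c}) \<le> Inf (h ` {a<..<n})"
  proof (rule cInf_greatest)
    show "h ` {a<..<n} \<noteq> {}" using assms by auto
    fix y assume "y \<in> h ` {a<..<n}"
    then obtain x where x: "x \<in> {a<..<n}" "y = h x" by blast
    show "Inf (h ` {a<..<c}) \<le> y"
    proof (cases "x < c")
      case True
      then have "y \<in> h ` {a<..<c}" using x by auto
      then show ?thesis using cInf_lower[OF _ bS1] by blast
    next
      case False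
      define x0 where "x0 = (a + c) / 2"
      have x0: "x0 \<in> {a<..<c}" "x0 \<in> {a<..<n}" "x0 < x" using assms False unfolding x0_def by auto
      have "h x0 < h x" using assms(3) x0(2,3) x(1) unfolding monotone_on_def by blast
      moreover have "Inf (h ` {a<..<c}) \<le> h x0" using cInf_lower[OF _ bS1] x0(1) by blast
      ultimately show ?thesis using x by simp
    qed
  qed
qed

lemma Inf_dec2:
  fixes h :: "real \<Rightarrow> real"
  assumes "a < c" "c < n" "strict_antimono_on {a<..<n} h" "h ` {a<..<n} \<subseteq> Xint"
  shows "Inf (h ` {c<..<n}) = Inf (h ` {a<..<n})"
proof (rule antisym)
  have sub: "h ` {c<..<n} \<subseteq> h ` {a<..<n}" using assms by auto
  have ne1: "h ` {c<..<n} \<noteq> {}" using assms by auto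
  have bS: "bdd_below (h ` {a<..<n})" using bdd_X[OF assms(4)] by simp
  have bS1: "bdd_below (h ` {c<..<n})" using bdd_X[of "h ` {c<..<n}"] sub assms(4) by auto
  show "Inf (h ` {a<..<n}) \<le> Inf (h ` {c<..<n})" by (rule cInf_superset_mono[OF ne1 bS sub])
  show "Inf (h ` {c<..<n}) \<le> Inf (h ` {a<..<n})"
  proof (rule cInf_greatest)
    show "h ` {a<..<n} \<noteq> {}" using assms by auto
    fix y assume "y \<in> h ` {a<..<n}"
    then obtain x where x: "x \<in> {a<..<n}" "y = h x" by blast
    show "Inf (h ` {c<..<n}) \<le> y"
    proof (cases "c < x")
      case True
      then have "y \<in> h ` {c<..<n}" using x by auto
      then show ?thesis using cInf_lower[OF _ bS1] by blast
    next
      case False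
      define x0 where "x0 = (c + n) / 2"
      have x0: "x0 \<in> {c<..<n}" "x0 \<in> {a<..<n}" "x < x0" using assms False unfolding x0_def by auto
      have "h x0 < h x" using assms(3) x0(2,3) x(1) unfolding monotone_on_def by blast
      moreover have "Inf (h ` {c<..<n}) \<le> h x0" using cInf_lower[OF _ bS1] x0(1) by blast
      ultimately show ?thesis using x by simp
    qed
  qed
qed

lemma Inf_inc2:
  fixes h :: "real \<Rightarrow> real"
  assumes "a < c" "c < n" "strict_mono_on {a<..<n} h"
    "h ` {a<..<n} = {Inf (h ` {a<..<n}) <..< Sup (h ` {a<..<n})}"
    "h ` {a<..<n} \<subseteq> Xint"
  shows "Inf (h ` {c<..<n}) = h c"
proof -
  let ?S2 = "h ` {c<..<n}"
  have sub: "?S2 \<subseteq> h ` {a<..<n}" using assms by auto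
  have ne: "?S2 \<noteq> {}" using assms by auto
  have b2: "bdd_below ?S2" using bdd_X[of ?S2] sub assms(5) by auto
  have ca: "c \<in> {a<..<n}" using assms by auto
  have low: "h c \<le> Inf ?S2"
  proof (rule cInf_greatest[OF ne])
    fix y assume "y \<in> ?S2"
    then obtain x where x: "x \<in> {c<..<n}" "y = h x" by blast
    have "h c < h x" using assms(3) ca x(1) assms(1) unfolding monotone_on_def by auto
    thus "h c \<le> y" using x by simp
  qed
  show ?thesis
  proof (rule ccontr)
    assume "Inf ?S2 \<noteq> h c"
    hence lt: "h c < Inf ?S2" using low by simp
    define y where "y = (h c + Inf ?S2) / 2"
    obtain z where z: "z \<in> ?S2" using ne by blast
    have "Inf ?S2 \<le> z" using cInf_lower[OF z b2] .
    moreover have "z < Sup (h ` {a<..<n})"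
    proof -
      have zS: "z \<in> h ` {a<..<n}" using z sub by blast
      show ?thesis using zS assms(4) by (metis greaterThanLessThan_iff)
    qed
    moreover have "h c \<in> h ` {a<..<n}" using ca by simp
    hence "Inf (h ` {a<..<n}) < h c" using assms(4) by (metis greaterThanLessThan_iff)
    ultimately have "y \<in> h ` {a<..<n}" using assms(4) lt unfolding y_def by auto
    then obtain x where x: "x \<in> {a<..<n}" "y = h x" by blast
    show False
    proof (cases "c < x")
      case True
      then have "h x \<in> ?S2" using x by auto
      then have "Inf ?S2 \<le> h x" using cInf_lower[OF _ b2] by blast
      then show False using x lt unfolding y_def by simp
    next
      case False
      have "h x \<le> h c"
      proof (cases "x = c")
        case True thus ?thesis by simp
      next
        case False
        hence "x < c" using \<open>\<not> c < x\<close> by simp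
        then have "h x < h c" using assms(3) ca x(1) unfolding monotone_on_def by blast
        thus ?thesis by simp
      qed
      then show False using x lt unfolding y_def by simp
    qed
  qed
qed

lemma Inf_dec1:
  fixes h :: "real \<Rightarrow> real"
  assumes "a < c" "c < n" "strict_antimono_on {a<..<n} h"
    "h ` {a<..<n} = {Inf (h ` {a<..<n}) <..< Sup (h ` {a<..<n})}"
    "h ` {a<..<n} \<subseteq> Xint"
  shows "Inf (h ` {a<..<c}) = h c"
proof -
  let ?S2 = "h ` {a<..<c}"
  have sub: "?S2 \<subseteq> h ` {a<..<n}" using assms by auto
  have ne: "?S2 \<noteq> {}" using assms by auto
  have b2: "bdd_below ?S2" using bdd_X[of ?S2] sub assms(5) by auto
  have ca: "c \<in> {a<..<n}" using assms by auto
  have low: "h c \<le> Inf ?S2"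
  proof (rule cInf_greatest[OF ne])
    fix y assume "y \<in> ?S2"
    then obtain x where x: "x \<in> {a<..<c}" "y = h x" by blast
    have "h c < h x" using assms(3) ca x(1) assms(2) unfolding monotone_on_def by auto
    thus "h c \<le> y" using x by simp
  qed
  show ?thesis
  proof (rule ccontr)
    assume "Inf ?S2 \<noteq> h c"
    hence lt: "h c < Inf ?S2" using low by simp
    define y where "y = (h c + Inf ?S2) / 2"
    obtain z where z: "z \<in> ?S2" using ne by blast
    have "Inf ?S2 \<le> z" using cInf_lower[OF z b2] .
    moreover have "z < Sup (h ` {a<..<n})"
    proof -
      have zS: "z \<in> h ` {a<..<n}" using z sub by blast
      show ?thesis using zS assms(4) by (metis greaterThanLessThan_iff)
    qed
    moreover have "h c \<in> h ` {a<..<n}" using ca by simp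
    hence "Inf (h ` {a<..<n}) < h c" using assms(4) by (metis greaterThanLessThan_iff)
    ultimately have "y \<in> h ` {a<..<n}" using assms(4) lt unfolding y_def by auto
    then obtain x where x: "x \<in> {a<..<n}" "y = h x" by blast
    show False
    proof (cases "x < c")
      case True
      then have "h x \<in> ?S2" using x by auto
      then have "Inf ?S2 \<le> h x" using cInf_lower[OF _ b2] by blast
      then show False using x lt unfolding y_def by simp
    next
      case False
      have "h x \<le> h c"
      proof (cases "x = c")
        case True thus ?thesis by simp
      next
        case False
        hence "c < x" using \<open>\<not> x < c\<close> by simp
        then have "h x < h c" using assms(3) ca x(1) unfolding monotone_on_def by blast
        thus ?thesis by simp
      qed
      then show False using x lt unfolding y_def by simp
    qed
  qed
qed

lemma refine_step:
  assumes h: "h \<in> PC_carrier" and B: "assoc_partition h B" and a: "a \<in> B" and c: "c \<in> Iv B a"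
  shows "eps_part h (insert c B) = eps_part h B"
proof -
  let ?B' = "insert c B"
  let ?n = "nextpt B a"
  note BB = assocD[OF B]
  note Ia = Iv_props[OF B a]
  have ac: "a < c" "c < ?n" using c unfolding Iv_def by auto
  have cX: "c \<in> Xint" and cB: "c \<notin> B" using c Ia(1,2) by auto
  have B': "assoc_partition h ?B'"
    unfolding assoc_iff using BB cX by auto
  have n1: "?n \<le> 1" "?n \<in> B \<union> {1}" using nextpt_props[OF BB(1) a BB(3)] by auto
  have nx_a: "nextpt ?B' a = c"
  proof (rule nextpt_eqI)
    show "finite ?B'" using BB(1) by simp
    show "c \<in> ?B' \<union> {1}" by simp
    show "a < c" using ac by simp
    show "c \<le> 1" using ac n1 by simp
    fix b assume "b \<in> ?B'" "a < b"
    then show "c \<le> b" using nextpt_props(4)[OF BB(1) a BB(3), of b] ac by auto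
  qed
  have nx_c: "nextpt ?B' c = ?n"
  proof (rule nextpt_eqI)
    show "finite ?B'" using BB(1) by simp
    show "?n \<in> ?B' \<union> {1}" using n1 by auto
    show "c < ?n" using ac by simp
    show "?n \<le> 1" using n1 by simp
    fix b assume "b \<in> ?B'" "c < b"
    then show "?n \<le> b" using nextpt_props(4)[OF BB(1) a BB(3), of b] ac by auto
  qed
  have nx_b: "nextpt ?B' b = nextpt B b" if b: "b \<in> B" "b \<noteq> a" for b
  proof (rule nextpt_eqI)
    have m: "nextpt B b \<in> B \<union> {1}" "b < nextpt B b" "nextpt B b \<le> 1"
      using nextpt_props[OF BB(1) b(1) BB(3)] by auto
    show "finite ?B'" using BB(1) by simp
    show "nextpt B b \<in> ?B' \<union> {1}" using m by auto
    show "b < nextpt B b" using m by simp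
    show "nextpt B b \<le> 1" using m by simp
    fix b' assume b': "b' \<in> ?B'" "b < b'"
    show "nextpt B b \<le> b'"
    proof (cases "b' = c")
      case True
      show ?thesis
      proof (rule ccontr)
        assume "\<not> nextpt B b \<le> b'"
        hence "c \<in> Iv B b" using True b' unfolding Iv_def by auto
        hence "a = b" using Iv_disj[OF B a b(1) c] by simp
        thus False using b by simp
      qed
    next
      case False
      then show ?thesis using b' nextpt_props(4)[OF BB(1) b(1) BB(3)] by auto
    qed
  qed
  have bet_b: "betapt h ?B' b = betapt h B b" if "b \<in> B" "b \<noteq> a" for b
    unfolding betapt_def using nx_b[OF that] by simp
  have bet_a: "betapt h ?B' a = Inf (h ` {a<..<c})" unfolding betapt_def nx_a ..
  have bet_c: "betapt h ?B' c = Inf (h ` {c<..<?n})" unfolding betapt_def nx_c ..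
  have betBa: "betapt h B a = Inf (h ` {a<..<?n})" unfolding betapt_def ..
  note Pa = piece[OF h B a]
  have Sx: "h ` {a<..<?n} \<subseteq> Xint" using Pa(7) unfolding Iv_def .
  have Simg: "h ` {a<..<?n} = {Inf (h ` {a<..<?n}) <..< Sup (h ` {a<..<?n})}"
    using Pa(3) unfolding betapt_def Up_def Iv_def .
  have hinjX: "inj_on h Xint" using PC_basic(3)[OF h] .
  have hcB: "h c \<notin> h ` B"
  proof
    assume "h c \<in> h ` B"
    then obtain b where "b \<in> B" "h c = h b" by blast
    hence "c = b" using hinjX cX BB(3) unfolding inj_on_def by blast
    thus False using cB \<open>b \<in> B\<close> by simp
  qed
  have hac: "h a \<noteq> h c"
  proof
    assume e: "h a = h c"
    have "h a \<in> h ` B" using a by (rule imageI)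
    with e hcB show False by simp
  qed
  have img': "h ` ?B' = insert (h c) (h ` B)" by simp
  define A where "A = {b \<in> B. strict_antimono_on {b<..<nextpt B b} h}"
  define A' where "A' = {b \<in> ?B'. strict_antimono_on {b<..<nextpt ?B' b} h}"
  have RA: "Rcount h B = card A" unfolding Rcount_def A_def ..
  have RA': "Rcount h ?B' = card A'" unfolding Rcount_def A'_def ..
  have finA: "finite A" unfolding A_def using BB(1) by simp
  have AA: "b \<in> A' \<longleftrightarrow> b \<in> A" if "b \<in> B" "b \<noteq> a" for b
    unfolding A_def A'_def using that nx_b[OF that] by simp
  have sp: "sigma_part h ?B' (h b) = betapt h ?B' b" if "b \<in> ?B'" for b
    using sigma_h[OF h B' that] .
  have s: "sigma_part h B (h b) = betapt h B b" if "b \<in> B" for b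
    using sigma_h[OF h B that] .
  have sub1: "{a<..<c} \<subseteq> {a<..<?n}" "{c<..<?n} \<subseteq> {a<..<?n}" using ac by auto
  from Pa(2) consider (inc) "strict_mono_on {a<..<?n} h" | (dec) "strict_antimono_on {a<..<?n} h"
    unfolding Iv_def by blast
  then show ?thesis
  proof cases
    case inc
    have i1: "Inf (h ` {a<..<c}) = Inf (h ` {a<..<?n})" using Inf_inc1[OF ac inc Sx] .
    have i2: "Inf (h ` {c<..<?n}) = h c" using Inf_inc2[OF ac inc Simg Sx] .
    have "A' = A"
    proof (rule Set.set_eqI)
      fix b
      show "b \<in> A' \<longleftrightarrow> b \<in> A"
      proof (cases "b = a")
        case True
        have "\<not> strict_antimono_on {a<..<?n} h" using not_both[OF _ inc] ac by simp
        moreover have "\<not> strict_antimono_on {a<..<c} h"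
          using not_both[OF ac(1) monotone_on_subset[OF inc sub1(1)]] .
        ultimately show ?thesis unfolding A_def A'_def using True nx_a by simp
      next
        case False
        show ?thesis
        proof (cases "b = c")
          case True
          have "\<not> strict_antimono_on {c<..<?n} h"
            using not_both[OF ac(2) monotone_on_subset[OF inc sub1(2)]] .
          then show ?thesis unfolding A_def A'_def using True nx_c cB by simp
        next
          case False
          then show ?thesis using AA[of b] \<open>b \<noteq> a\<close> unfolding A_def A'_def by auto
        qed
      qed
    qed
    hence R: "Rcount h ?B' = Rcount h B" using RA RA' by simp
    have "sigma_part h ?B' = sigma_part h B"
    proof
      fix y
      show "sigma_part h ?B' y = sigma_part h B y"
      proof (cases "y \<in> h ` ?B'")
        case False
        then show ?thesis using sigma_out[of y h ?B'] sigma_out[of y h B] by auto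
      next
        case True
        then obtain b where b: "b \<in> ?B'" "y = h b" by blast
        show ?thesis
        proof (cases "b = c")
          case True
          then show ?thesis using sp[OF b(1)] b bet_c i2 sigma_out[OF hcB] by simp
        next
          case False
          hence bB: "b \<in> B" using b by simp
          show ?thesis
          proof (cases "b = a")
            case True
            then show ?thesis using sp[OF b(1)] b s[OF bB] bet_a i1 betBa by simp
          next
            case False
            then show ?thesis using sp[OF b(1)] b s[OF bB] bet_b[OF bB] by simp
          qed
        qed
      qed
    qed
    then show ?thesis unfolding eps_part_def using R by simp
  next
    case dec
    have d1: "Inf (h ` {a<..<c}) = h c" using Inf_dec1[OF ac dec Simg Sx] .
    have d2: "Inf (h ` {c<..<?n}) = Inf (h ` {a<..<?n})" using Inf_dec2[OF ac dec Sx] .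
    have "A' = insert c A"
    proof (rule Set.set_eqI)
      fix b
      show "b \<in> A' \<longleftrightarrow> b \<in> insert c A"
      proof (cases "b = a")
        case True
        have "strict_antimono_on {a<..<c} h" using monotone_on_subset[OF dec sub1(1)] .
        then show ?thesis unfolding A_def A'_def using True nx_a dec a by simp
      next
        case False
        show ?thesis
        proof (cases "b = c")
          case True
          have "strict_antimono_on {c<..<?n} h" using monotone_on_subset[OF dec sub1(2)] .
          then show ?thesis unfolding A_def A'_def using True nx_c by simp
        next
          case False
          then show ?thesis using AA[of b] \<open>b \<noteq> a\<close> unfolding A_def A'_def by auto
        qed
      qed
    qed
    moreover have "c \<notin> A" using cB unfolding A_def by simp
    ultimately have R: "Rcount h ?B' = Rcount h B + 1" using RA RA' finA by simp
    let ?t = "Transposition.transpose (h a) (h c)"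
    have "sigma_part h ?B' = sigma_part h B \<circ> ?t"
    proof
      fix y
      show "sigma_part h ?B' y = (sigma_part h B \<circ> ?t) y"
      proof (cases "y \<in> h ` ?B'")
        case False
        hence "y \<noteq> h a" "y \<noteq> h c" "y \<notin> h ` B" using a by auto
        then show ?thesis using sigma_out[of y h ?B'] sigma_out[of y h B] False by simp
      next
        case True
        then obtain b where b: "b \<in> ?B'" "y = h b" by blast
        show ?thesis
        proof (cases "b = c")
          case True
          then show ?thesis using sp[OF b(1)] b bet_c d2 betBa s[OF a] by simp
        next
          case False
          hence bB: "b \<in> B" using b by simp
          show ?thesis
          proof (cases "b = a")
            case True
            then show ?thesis using sp[OF b(1)] b bet_a d1 sigma_out[OF hcB] by simp
          next
            case False
            have "h b \<noteq> h a" using False hinjX bB a BB(3) unfolding inj_on_def by blast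
            moreover have "h b \<noteq> h c" using hcB bB by (metis image_eqI)
            ultimately show ?thesis using sp[OF b(1)] b s[OF bB] bet_b[OF bB False] by simp
          qed
        qed
      qed
    qed
    moreover have "evenperm (sigma_part h B \<circ> ?t) \<longleftrightarrow> \<not> evenperm (sigma_part h B)"
    proof -
      have "evenperm ?t = False" using evenperm_swap[of "h a" "h c"] hac by simp
      then show ?thesis using evenperm_comp[OF sigma_permutes(2)[OF h B] permutation_swap_id, of "h a" "h c"] by simp
    qed
    ultimately have E: "evenperm (sigma_part h ?B') \<longleftrightarrow> \<not> evenperm (sigma_part h B)" by simp
    have ar: "(int r + 1 + 1) mod 2 = (int r) mod 2" for r :: nat by presburger
    show ?thesis unfolding eps_part_def sgn2_def R using E
      by (cases "evenperm (sigma_part h B)") (simp_all add: ar add.commute)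
  qed
qed

lemma refine_union:
  assumes h: "h \<in> PC_carrier" and B: "assoc_partition h B" and D: "finite D" "D \<subseteq> Xint"
  shows "eps_part h (B \<union> D) = eps_part h B"
  using D
proof (induction D rule: finite_induct)
  case empty
  then show ?case by simp
next
  case (insert d D)
  have IH: "eps_part h (B \<union> D) = eps_part h B" using insert by simp
  have BD: "assoc_partition h (B \<union> D)" using B insert.hyps(1) insert.prems unfolding assoc_iff by auto
  have eq: "B \<union> insert d D = insert d (B \<union> D)" by simp
  show ?case
  proof (cases "d \<in> B \<union> D")
    case True
    hence "B \<union> insert d D = B \<union> D" by auto
    then show ?thesis using IH by simp
  next
    case False
    have dX: "d \<in> Xint" using insert.prems by simp
    obtain a where a: "a \<in> B \<union> D" "d \<in> Iv (B \<union> D) a" using Iv_cover[OF BD dX False] by blast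
    show ?thesis unfolding eq using refine_step[OF h BD a] IH by simp
  qed
qed

lemma refine_sup:
  assumes h: "h \<in> PC_carrier" and B: "assoc_partition h B" and C: "finite C" "B \<subseteq> C" "C \<subseteq> Xint"
  shows "eps_part h C = eps_part h B"
proof -
  have e: "B \<union> (C - B) = C" using C by auto
  have "eps_part h (B \<union> (C - B)) = eps_part h B" using refine_union[OF h B, of "C - B"] C by auto
  thus ?thesis unfolding e .
qed

definition B0 :: "(real \<Rightarrow> real) \<Rightarrow> real set" where
  "B0 h = insert 0 {x \<in> Xint. \<not> isCont h x}"

lemma B0_sub:
  assumes "assoc_partition h C"
  shows "B0 h \<subseteq> C"
  using assocD[OF assms] unfolding B0_def by blast

lemma B0_assoc:
  assumes "assoc_partition h C"
  shows "assoc_partition h (B0 h)"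
proof -
  have "finite (B0 h)" using finite_subset[OF B0_sub[OF assms] assocD(1)[OF assms]] .
  moreover have "B0 h \<subseteq> Xint" unfolding B0_def Xint_def by auto
  ultimately show ?thesis unfolding assoc_iff B0_def by auto
qed

lemma min_partition_eq:
  assumes "assoc_partition h C"
  shows "min_partition h = B0 h"
  unfolding min_partition_def
proof (rule the_equality)
  show "assoc_partition h (B0 h) \<and> (\<forall>C. assoc_partition h C \<longrightarrow> card (B0 h) \<le> card C)"
  proof (intro conjI allI impI)
    show "assoc_partition h (B0 h)" using B0_assoc[OF assms] .
    fix C' assume C': "assoc_partition h C'"
    show "card (B0 h) \<le> card C'" using card_mono[OF assocD(1)[OF C'] B0_sub[OF C']] .
  qed
next
  fix B assume B: "assoc_partition h B \<and> (\<forall>C. assoc_partition h C \<longrightarrow> card B \<le> card C)"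
  have "card B \<le> card (B0 h)" using B B0_assoc[OF assms] by simp
  moreover have "B0 h \<subseteq> B" using B0_sub B by simp
  moreover have "finite B" using assocD(1) B by blast
  ultimately show "B = B0 h" using card_seteq by (metis)
qed

lemma epsilon_eq:
  assumes h: "h \<in> PC_carrier" and C: "assoc_partition h C"
  shows "epsilon h = eps_part h C"
proof -
  have "epsilon h = eps_part h (B0 h)" unfolding epsilon_def min_partition_eq[OF C] ..
  also have "\<dots> = eps_part h C"
    using refine_sup[OF h B0_assoc[OF C] assocD(1)[OF C] B0_sub[OF C] assocD(3)[OF C]] by simp
  finally show ?thesis .
qed

lemma PC_has_assoc:
  assumes h: "h \<in> PC_carrier"
  obtains C where "assoc_partition h C"
proof -
  obtain F where F: "finite F" "\<forall>x \<in> Xint - F. continuous (at x within Xint) h"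
    using h unfolding PC_carrier_def by blast
  let ?C = "insert 0 (F \<inter> Xint)"
  have "isCont h x" if x: "x \<in> Xint" "x \<notin> ?C" for x
  proof -
    have x01: "x \<in> {0<..<1}" using x unfolding Xint_def by auto
    have "continuous (at x within Xint) h" using F x by blast
    hence "continuous (at x within {0<..<1}) h"
      by (rule continuous_within_subset) (auto simp: Xint_def)
    thus ?thesis using continuous_within_open[OF x01 open_greaterThanLessThan] by blast
  qed
  moreover have "?C \<subseteq> Xint" unfolding Xint_def by auto
  ultimately have "assoc_partition h ?C" unfolding assoc_iff using F(1) by auto
  thus ?thesis using that by blast
qed

lemma comp_setup:
  assumes g: "g \<in> PC_carrier" and h: "h \<in> PC_carrier"
    and B: "assoc_partition g B" and C: "assoc_partition h C"
  defines "P \<equiv> B \<union> inv_into Xint g ` C"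
  shows "assoc_partition g P" "g ` P = g ` B \<union> C" "assoc_partition h (g ` P)"
    "assoc_partition (h \<circ> g) P"
proof -
  note gb = PC_basic[OF g]
  note BB = assocD[OF B]
  note CC = assocD[OF C]
  have cg: "c \<in> g ` Xint" if "c \<in> C" for c using that CC(3) gb(4) by auto
  have invC: "inv_into Xint g ` C \<subseteq> Xint"
  proof
    fix y assume "y \<in> inv_into Xint g ` C"
    then obtain c where c: "c \<in> C" "y = inv_into Xint g c" by blast
    show "y \<in> Xint" using inv_into_into[OF cg[OF c(1)]] c(2) by simp
  qed
  have gi: "g (inv_into Xint g c) = c" if "c \<in> C" for c
    using f_inv_into_f[OF cg[OF that]] .
  have finP: "finite P" unfolding P_def using BB(1) CC(1) by simp
  have PX: "P \<subseteq> Xint" unfolding P_def using BB(3) invC by simp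
  show gP: "g ` P = g ` B \<union> C" unfolding P_def image_Un
  proof -
    have "g ` inv_into Xint g ` C = C"
    proof (rule Set.set_eqI)
      fix y show "y \<in> g ` inv_into Xint g ` C \<longleftrightarrow> y \<in> C"
        using gi by (auto simp: image_iff)
    qed
    thus "g ` B \<union> g ` inv_into Xint g ` C = g ` B \<union> C" by simp
  qed
  show "assoc_partition g P" unfolding assoc_iff
    using finP PX BB unfolding P_def by auto
  have gBX: "g ` B \<subseteq> Xint" using BB(3) gb(4) by auto
  show "assoc_partition h (g ` P)" unfolding assoc_iff gP
    using BB(1) CC gBX by auto
  have "isCont (h \<circ> g) x" if x: "x \<in> Xint" "x \<notin> P" for x
  proof -
    have xB: "x \<notin> B" using x unfolding P_def by simp
    have c1: "isCont g x" using BB(4)[OF x(1) xB] .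
    have gxX: "g x \<in> Xint" using x(1) gb(4) by auto
    have gxC: "g x \<notin> C"
    proof
      assume "g x \<in> C"
      hence "inv_into Xint g (g x) \<in> P" unfolding P_def by simp
      moreover have "inv_into Xint g (g x) = x" using inv_into_f_f[OF gb(3) x(1)] .
      ultimately show False using x by simp
    qed
    have c2: "isCont h (g x)" using CC(4)[OF gxX gxC] .
    show ?thesis using continuous_at_compose[OF c1 c2] .
  qed
  then show "assoc_partition (h \<circ> g) P" unfolding assoc_iff
    using finP PX BB unfolding P_def by auto
qed

lemma PC_comp_closed:
  assumes g: "g \<in> PC_carrier" and h: "h \<in> PC_carrier"
  shows "h \<circ> g \<in> PC_carrier"
proof -
  obtain B where B: "assoc_partition g B" using PC_has_assoc[OF g] by blast
  obtain C where C: "assoc_partition h C" using PC_has_assoc[OF h] by blast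
  define P where "P = B \<union> inv_into Xint g ` C"
  have P: "assoc_partition (h \<circ> g) P" using comp_setup(4)[OF g h B C] unfolding P_def .
  note gb = PC_basic[OF g]
  note hb = PC_basic[OF h]
  have bij: "bij_betw (h \<circ> g) Xint Xint" using bij_betw_trans[OF gb(1) hb(1)] .
  have out: "\<forall>x. x \<notin> Xint \<longrightarrow> (h \<circ> g) x = x" using gb(2) hb(2) by simp
  have "\<forall>x \<in> Xint - P. continuous (at x within Xint) (h \<circ> g)"
    using assocD(4)[OF P] continuous_at_imp_continuous_within by blast
  then show ?thesis unfolding PC_carrier_def using bij out assocD(1)[OF P] by blast
qed

lemma iv_corr:
  assumes g: "g \<in> PC_carrier" and P: "assoc_partition g P" and a: "a \<in> P"
  shows "betapt g P a \<in> g ` P" "nextpt (g ` P) (betapt g P a) = Up g P a"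
    "Iv (g ` P) (betapt g P a) = g ` Iv P a"
proof -
  note PP = assocD[OF P]
  note pc = piece[OF g P a]
  note gb = PC_basic[OF g]
  let ?q = "betapt g P a"
  let ?m = "Up g P a"
  show qQ: "?q \<in> g ` P" using betapt_in[OF g P a] .
  show nx: "nextpt (g ` P) ?q = ?m"
  proof (rule nextpt_eqI)
    show "finite (g ` P)" using PP(1) by simp
    show "?m \<in> g ` P \<union> {1}"
    proof (cases "?m < 1")
      case True then show ?thesis using Up_in[OF g P a] by simp
    next
      case False then show ?thesis using pc(6) by simp
    qed
    show "?q < ?m" using pc(5) .
    show "?m \<le> 1" using pc(6) .
    fix b assume b: "b \<in> g ` P" "?q < b"
    show "?m \<le> b"
    proof (rule ccontr)
      assume "\<not> ?m \<le> b"
      hence "b \<in> g ` Iv P a" using pc(3) b(2) by simp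
      then obtain x where x: "x \<in> Iv P a" "b = g x" by blast
      obtain p where p: "p \<in> P" "b = g p" using b(1) by blast
      have "x \<in> Xint" using x Iv_props(1)[OF P a] by blast
      hence "x = p" using gb(3) p x PP(3) unfolding inj_on_def by blast
      thus False using x p Iv_props(2)[OF P a] by blast
    qed
  qed
  show "Iv (g ` P) ?q = g ` Iv P a" unfolding Iv_def nx using pc(3) unfolding Iv_def by simp
qed

lemma mono_comp_cases:
  fixes g h :: "real \<Rightarrow> real"
  shows "strict_mono_on I g \<Longrightarrow> strict_mono_on (g ` I) h \<Longrightarrow> strict_mono_on I (h \<circ> g)"
    "strict_mono_on I g \<Longrightarrow> strict_antimono_on (g ` I) h \<Longrightarrow> strict_antimono_on I (h \<circ> g)"
    "strict_antimono_on I g \<Longrightarrow> strict_mono_on (g ` I) h \<Longrightarrow> strict_antimono_on I (h \<circ> g)"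
    "strict_antimono_on I g \<Longrightarrow> strict_antimono_on (g ` I) h \<Longrightarrow> strict_mono_on I (h \<circ> g)"
  unfolding monotone_on_def by auto

lemma parity_card:
  assumes "finite S"
  shows "even (card {a\<in>S. U1 a \<noteq> U2 a} + card {a\<in>S. U1 a} + card {a\<in>S. U2 a})"
  using assms
proof (induction S rule: finite_induct)
  case empty
  then show ?case by simp
next
  case (insert x F)
  have e: "{a \<in> insert x F. Z a} = (if Z x then insert x {a\<in>F. Z a} else {a\<in>F. Z a})" for Z
    by auto
  have c: "card {a \<in> insert x F. Z a} = (if Z x then Suc (card {a\<in>F. Z a}) else card {a\<in>F. Z a})" for Z
    unfolding e using insert.hyps by auto
  show ?case unfolding c[of "\<lambda>a. U1 a \<noteq> U2 a"] c[of U1] c[of U2] using insert.IH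
    by (cases "U1 x"; cases "U2 x") auto
qed

lemma arith_par:
  fixes r1 r2 r3 :: nat
  assumes "even (r1 + r2 + r3)"
  shows "(int r1 + (if (e1 = e2) then 0 else 1)) mod 2 =
         ((int r3 + (if e1 then 0 else 1)) mod 2 + (int r2 + (if e2 then 0 else 1)) mod 2) mod 2"
proof -
  obtain k where k: "r1 + r2 + r3 = 2 * k" using assms by blast
  hence k': "int r1 = 2 * int k - int r2 - int r3" by simp
  show ?thesis unfolding k' by (cases e1; cases e2; simp; presburger)
qed

lemma eps_comp:
  assumes g: "g \<in> PC_carrier" and h: "h \<in> PC_carrier"
  shows "epsilon (h \<circ> g) = (epsilon h + epsilon g) mod 2"
proof -
  obtain B where B: "assoc_partition g B" using PC_has_assoc[OF g] by blast
  obtain C where C: "assoc_partition h C" using PC_has_assoc[OF h] by blast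
  define P where "P = B \<union> inv_into Xint g ` C"
  define Q where "Q = g ` P"
  have gP: "assoc_partition g P" using comp_setup(1)[OF g h B C] unfolding P_def .
  have hQ: "assoc_partition h Q" using comp_setup(3)[OF g h B C] unfolding P_def Q_def .
  have hgP: "assoc_partition (h \<circ> g) P" using comp_setup(4)[OF g h B C] unfolding P_def .
  have hg: "h \<circ> g \<in> PC_carrier" using PC_comp_closed[OF g h] .
  have e1: "epsilon (h \<circ> g) = eps_part (h \<circ> g) P" using epsilon_eq[OF hg hgP] .
  have e2: "epsilon g = eps_part g P" using epsilon_eq[OF g gP] .
  have e3: "epsilon h = eps_part h Q" using epsilon_eq[OF h hQ] .
  define L where "L = betapt g P"
  have LQ: "L a \<in> Q" and IvQ: "Iv Q (L a) = g ` Iv P a" if "a \<in> P" for a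
    using iv_corr[OF g gP that] unfolding L_def Q_def by auto
  have Linj: "inj_on L P" using betapt_inj[OF g gP] unfolding L_def .
  have Limg: "L ` P = Q" using betapt_image[OF g gP] unfolding L_def Q_def .
  have finP: "finite P" using assocD(1)[OF gP] .
  have finQ: "finite Q" using assocD(1)[OF hQ] .
  have c1: "betapt (h \<circ> g) P a = betapt h Q (L a)" if a: "a \<in> P" for a
  proof -
    have "betapt (h \<circ> g) P a = Inf ((h \<circ> g) ` Iv P a)" unfolding betapt_def Iv_def ..
    also have "\<dots> = Inf (h ` Iv Q (L a))" unfolding IvQ[OF a] image_comp ..
    also have "\<dots> = betapt h Q (L a)" unfolding betapt_def Iv_def ..
    finally show ?thesis .
  qed
  define Ag where "Ag a = strict_antimono_on (Iv P a) g" for a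
  define Ah where "Ah q = strict_antimono_on (Iv Q q) h" for q
  define Ahg where "Ahg a = strict_antimono_on (Iv P a) (h \<circ> g)" for a
  have Acomb: "Ahg a \<longleftrightarrow> (Ag a \<noteq> Ah (L a))" if a: "a \<in> P" for a
  proof -
    have lt1: "a < nextpt P a" using Iv_props(3)[OF gP a] .
    have lt2: "L a < nextpt Q (L a)" using Iv_props(3)[OF hQ LQ[OF a]] .
    have nb1: "\<not> strict_antimono_on (Iv P a) f" if "strict_mono_on (Iv P a) f" for f :: "real \<Rightarrow> real"
      using not_both[OF lt1] that unfolding Iv_def by blast
    have nb2: "\<not> strict_antimono_on (Iv Q (L a)) h" if "strict_mono_on (Iv Q (L a)) h"
      using not_both[OF lt2] that unfolding Iv_def by blast
    have mg: "strict_mono_on (Iv P a) g \<or> strict_antimono_on (Iv P a) g" using piece(2)[OF g gP a] .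
    have mh: "strict_mono_on (g ` Iv P a) h \<or> strict_antimono_on (g ` Iv P a) h"
      using piece(2)[OF h hQ LQ[OF a]] unfolding IvQ[OF a] .
    from mg mh show ?thesis
      unfolding Ahg_def Ag_def Ah_def IvQ[OF a]
      using mono_comp_cases[of "Iv P a" g h] nb1 nb2 unfolding IvQ[OF a] by blast
  qed
  have Rhg: "Rcount (h \<circ> g) P = card {a\<in>P. Ag a \<noteq> Ah (L a)}"
    unfolding Rcount_def using Acomb unfolding Ahg_def Iv_def by (metis (no_types, lifting))
  have Rg: "Rcount g P = card {a\<in>P. Ag a}" unfolding Rcount_def Ag_def Iv_def ..
  have Rh: "Rcount h Q = card {a\<in>P. Ah (L a)}"
  proof -
    have "L ` {a\<in>P. Ah (L a)} = {q\<in>Q. Ah q}"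
    proof (rule Set.set_eqI, rule iffI)
      fix q assume "q \<in> L ` {a\<in>P. Ah (L a)}"
      then obtain a where a: "a \<in> P" "Ah (L a)" "q = L a" by blast
      thus "q \<in> {q\<in>Q. Ah q}" using LQ[OF a(1)] by simp
    next
      fix q assume q: "q \<in> {q\<in>Q. Ah q}"
      then have "q \<in> L ` P" using Limg by simp
      then obtain a where a: "a \<in> P" "q = L a" by blast
      have "a \<in> {a\<in>P. Ah (L a)}" using a q by simp
      thus "q \<in> L ` {a\<in>P. Ah (L a)}" using a(2) by (rule rev_image_eqI)
    qed
    moreover have "inj_on L {a\<in>P. Ah (L a)}" by (rule inj_on_subset[OF Linj]) auto
    ultimately have "card {a\<in>P. Ah (L a)} = card {q\<in>Q. Ah q}" using card_image[of L "{a\<in>P. Ah (L a)}"] by simp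
    thus ?thesis unfolding Rcount_def Ah_def Iv_def by simp
  qed
  have par: "even (Rcount (h \<circ> g) P + Rcount g P + Rcount h Q)"
    unfolding Rhg Rg Rh using parity_card[OF finP, of Ag "\<lambda>a. Ah (L a)"] by simp
  let ?sg = "sigma_part g P"
  let ?sh = "sigma_part h Q"
  let ?t = "map_permutation Q h ?sg"
  have sgperm: "?sg permutes Q" using sigma_permutes(1)[OF g gP] unfolding Q_def .
  have hinjQ: "inj_on h Q" using h_inj_B[OF h hQ] .
  have tperm: "permutation ?t"
  proof -
    have "?t permutes (h ` Q)" by (rule map_permutation_permutes[OF _ sgperm]) (simp add: bij_betw_def hinjQ)
    thus ?thesis using permutation_permutes finQ by blast
  qed
  have tev: "evenperm ?t \<longleftrightarrow> evenperm ?sg" using evenperm_map_permutation[OF hinjQ sgperm finQ] .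
  have hgP_img: "(h \<circ> g) ` P = h ` Q" unfolding Q_def image_comp ..
  have "sigma_part (h \<circ> g) P = ?sh \<circ> ?t"
  proof
    fix y
    show "sigma_part (h \<circ> g) P y = (?sh \<circ> ?t) y"
    proof (cases "y \<in> h ` Q")
      case False
      have "?t y = y" unfolding map_permutation_def restrict_id_def using False by simp
      moreover have "sigma_part (h \<circ> g) P y = y" using sigma_out[of y "h \<circ> g" P] False hgP_img by simp
      ultimately show ?thesis using sigma_out[OF False] by simp
    next
      case True
      then obtain a where a: "a \<in> P" "y = h (g a)" unfolding Q_def by blast
      have gaQ: "g a \<in> Q" using a unfolding Q_def by simp
      have "?t y = h (?sg (g a))"
        unfolding map_permutation_def restrict_id_def using True a inv_into_f_f[OF hinjQ gaQ] by simp
      also have "\<dots> = h (L a)" using sigma_h[OF g gP a(1)] unfolding L_def by simp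
      finally have t: "?t y = h (L a)" .
      have "sigma_part (h \<circ> g) P y = betapt (h \<circ> g) P a"
        using sigma_h[OF hg hgP a(1)] a by simp
      also have "\<dots> = betapt h Q (L a)" using c1[OF a(1)] .
      also have "\<dots> = ?sh (h (L a))" using sigma_h[OF h hQ LQ[OF a(1)]] by simp
      finally show ?thesis using t by simp
    qed
  qed
  hence ev: "evenperm (sigma_part (h \<circ> g) P) \<longleftrightarrow> (evenperm ?sh \<longleftrightarrow> evenperm ?sg)"
    using evenperm_comp[OF sigma_permutes(2)[OF h hQ] tperm] tev by simp
  show ?thesis unfolding e1 e2 e3 eps_part_def sgn2_def ev
    using arith_par[OF par] by simp
qed

lemma bijX_bij:
  assumes "bij_betw f Xint Xint" "\<And>x. x \<notin> Xint \<Longrightarrow> f x = x"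
  shows "bij f"
proof -
  have inj: "inj f"
  proof (rule injI)
    fix x y assume fxy: "f x = f y"
    have fX: "f z \<in> Xint" if "z \<in> Xint" for z using that assms(1) unfolding bij_betw_def by blast
    show "x = y"
    proof (cases "x \<in> Xint")
      case x: True
      show ?thesis
      proof (cases "y \<in> Xint")
        case True
        then show ?thesis using x assms(1) fxy unfolding bij_betw_def inj_on_def by blast
      next
        case False
        then show ?thesis using fX[OF x] assms(2)[of y] fxy by simp
      qed
    next
      case x: False
      show ?thesis
      proof (cases "y \<in> Xint")
        case True
        then show ?thesis using fX[OF True] assms(2)[of x] x fxy by simp
      next
        case False
        then show ?thesis using assms(2) x fxy by simp
      qed
    qed
  qed
  have surj: "surj f"
  proof -
    have "y \<in> range f" for y
    proof (cases "y \<in> Xint")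
      case True
      then have "y \<in> f ` Xint" using assms(1) unfolding bij_betw_def by simp
      then show ?thesis by blast
    next
      case False
      then show ?thesis using assms(2)[of y] by (metis rangeI)
    qed
    thus ?thesis by blast
  qed
  show ?thesis using inj surj by (simp add: bij_def)
qed

lemma PC_bij: "h \<in> PC_carrier \<Longrightarrow> bij h"
  using bijX_bij PC_basic by blast

lemma inv_props:
  assumes "bij_betw f Xint Xint" "\<And>x. x \<notin> Xint \<Longrightarrow> f x = x"
  shows "bij_betw (inv_into UNIV f) Xint Xint" "\<And>x. x \<notin> Xint \<Longrightarrow> inv_into UNIV f x = x"
    "inv_into UNIV f \<circ> f = id" "f \<circ> inv_into UNIV f = id"
proof -
  have b: "bij f" using bijX_bij[OF assms] .
  show io: "inv_into UNIV f \<circ> f = id" using b by (simp add: bij_is_inj)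
  show oi: "f \<circ> inv_into UNIV f = id" using b by (metis bij_is_surj surj_iff)
  show out: "inv_into UNIV f x = x" if "x \<notin> Xint" for x
    using assms(2)[OF that] b by (metis bij_inv_eq_iff)
  have into: "inv_into UNIV f y \<in> Xint" if "y \<in> Xint" for y
  proof (rule ccontr)
    assume "inv_into UNIV f y \<notin> Xint"
    hence "f (inv_into UNIV f y) = inv_into UNIV f y" using assms(2) by simp
    moreover have "f (inv_into UNIV f y) = y" using oi by (metis comp_apply id_apply)
    ultimately have "inv_into UNIV f y = y" by simp
    with \<open>inv_into UNIV f y \<notin> Xint\<close> that show False by simp
  qed
  have onto: "x \<in> inv_into UNIV f ` Xint" if "x \<in> Xint" for x
  proof -
    have "f x \<in> Xint" using that assms(1) unfolding bij_betw_def by blast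
    moreover have "inv_into UNIV f (f x) = x" using io by (metis comp_apply id_apply)
    ultimately show ?thesis by (metis imageI)
  qed
  show "bij_betw (inv_into UNIV f) Xint Xint"
  proof -
    have injinv: "inj_on (inv_into UNIV f) Xint"
      by (rule inj_on_inverseI[where g=f]) (metis oi comp_apply id_apply)
    show ?thesis unfolding bij_betw_def using into onto injinv by blast
  qed
qed

lemma PC_inv_closed:
  assumes h: "h \<in> PC_carrier"
  shows "inv_into UNIV h \<in> PC_carrier"
proof -
  note hb = PC_basic[OF h]
  note ip = inv_props[OF hb(1) hb(2)]
  obtain B where B: "assoc_partition h B" using PC_has_assoc[OF h] by blast
  note BB = assocD[OF B]
  have hinj: "inj h" using PC_bij[OF h] bij_is_inj by blast
  have "isCont (inv_into UNIV h) y" if y: "y \<in> Xint" "y \<notin> h ` B" for y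
  proof -
    obtain x where x: "x \<in> Xint" "y = h x" using y hb(4) by (metis imageE)
    have xB: "x \<notin> B" using x y by blast
    obtain a where a: "a \<in> B" "x \<in> Iv B a" using Iv_cover[OF B x(1) xB] by blast
    have opn: "open (Iv B a)" unfolding Iv_def by simp
    obtain d where d: "d > 0" "ball x d \<subseteq> Iv B a" using openE[OF opn a(2)] by blast
    define d' where "d' = d / 2"
    have d': "d' > 0" using d unfolding d'_def by simp
    have inI: "z \<in> Iv B a" if "\<bar>z - x\<bar> \<le> d'" for z
    proof -
      have "dist z x < d" using that d(1) unfolding d'_def dist_real_def by simp
      thus ?thesis using d(2) by (auto simp: dist_commute)
    qed
    have "isCont (inv_into UNIV h) (h x)"
    proof (rule isCont_inverse_function[where f=h and g="inv_into UNIV h" and x=x, OF d'])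
      fix z assume "\<bar>z - x\<bar> \<le> d'"
      show "inv_into UNIV h (h z) = z" using hinj by simp
    next
      fix z assume z: "\<bar>z - x\<bar> \<le> d'"
      have "z \<in> Iv B a" using inI[OF z] .
      hence "z \<in> Xint" "z \<notin> B" using Iv_props(1,2)[OF B a(1)] by blast+
      thus "isCont h z" using BB(4) by blast
    qed
    thus ?thesis using x by simp
  qed
  hence "\<forall>y\<in>Xint - h ` B. continuous (at y within Xint) (inv_into UNIV h)"
    using continuous_at_imp_continuous_within by blast
  moreover have "finite (h ` B)" using BB(1) by simp
  ultimately show ?thesis unfolding PC_carrier_def using ip(1,2) by blast
qed

lemma id_PC: "id \<in> PC_carrier"
  unfolding PC_carrier_def by (auto intro!: exI[of _ "{}"] simp: bij_betw_def)

lemma PC_carrier_eq [simp]: "carrier PC = PC_carrier" and PC_mult [simp]: "x \<otimes>\<^bsub>PC\<^esub> y = x \<circ> y"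
  and PC_one [simp]: "\<one>\<^bsub>PC\<^esub> = id"
  unfolding PC_def by simp_all

lemma group_PC: "group PC"
proof (rule groupI)
  show "\<And>x y. x \<in> carrier PC \<Longrightarrow> y \<in> carrier PC \<Longrightarrow> x \<otimes>\<^bsub>PC\<^esub> y \<in> carrier PC"
    using PC_comp_closed by simp
  show "\<one>\<^bsub>PC\<^esub> \<in> carrier PC" using id_PC by simp
  show "\<And>x y z. x \<in> carrier PC \<Longrightarrow> y \<in> carrier PC \<Longrightarrow> z \<in> carrier PC \<Longrightarrow>
      x \<otimes>\<^bsub>PC\<^esub> y \<otimes>\<^bsub>PC\<^esub> z = x \<otimes>\<^bsub>PC\<^esub> (y \<otimes>\<^bsub>PC\<^esub> z)" by (simp add: comp_assoc)
  show "\<And>x. x \<in> carrier PC \<Longrightarrow> \<one>\<^bsub>PC\<^esub> \<otimes>\<^bsub>PC\<^esub> x = x" by simp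
  show "\<And>x. x \<in> carrier PC \<Longrightarrow> \<exists>y\<in>carrier PC. y \<otimes>\<^bsub>PC\<^esub> x = \<one>\<^bsub>PC\<^esub>"
  proof -
    fix x assume x: "x \<in> carrier PC"
    hence "inv_into UNIV x \<in> carrier PC" "inv_into UNIV x \<circ> x = id"
      using PC_inv_closed inv_props(3)[OF PC_basic(1,2)] by auto
    thus "\<exists>y\<in>carrier PC. y \<otimes>\<^bsub>PC\<^esub> x = \<one>\<^bsub>PC\<^esub>" by auto
  qed
qed

lemma PC_inv:
  assumes h: "h \<in> PC_carrier"
  shows "inv\<^bsub>PC\<^esub> h = inv_into UNIV h"
proof -
  note hb = PC_basic[OF h]
  have "inv_into UNIV h \<circ> h = id" using inv_props(3)[OF hb(1) hb(2)] .
  thus ?thesis using group.inv_equality[OF group_PC, of "inv_into UNIV h" h] PC_inv_closed[OF h] h by simp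
qed

lemma eps_hom: "g \<in> PC_carrier \<Longrightarrow> h \<in> PC_carrier \<Longrightarrow> epsilon (g \<circ> h) = (epsilon g + epsilon h) mod 2"
  using eps_comp by blast

lemma eps_range: "epsilon h \<in> {0, 1}"
  unfolding epsilon_def eps_part_def by auto

definition supp :: "(real \<Rightarrow> real) \<Rightarrow> real set" where
  "supp s = {x. s x \<noteq> x}"

lemma isCont_fin_supp:
  fixes s :: "real \<Rightarrow> real"
  assumes "finite F" "\<And>y. y \<notin> F \<Longrightarrow> s y = y" "x \<notin> F"
  shows "isCont s x"
proof -
  have "open (- F)" using finite_imp_closed[OF assms(1)] by (simp add: open_Compl)
  hence ev: "eventually (\<lambda>y. y \<in> - F) (nhds x)" using eventually_nhds_in_open assms(3) by blast
  have "eventually (\<lambda>y. s y = id y) (nhds x)"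
    by (rule eventually_mono[OF ev]) (use assms(2) in simp)
  hence "isCont s x \<longleftrightarrow> isCont id x" by (rule isCont_cong)
  thus ?thesis by simp
qed

lemma Sfin_D:
  assumes "s \<in> Sfin"
  shows "bij_betw s Xint Xint" "\<And>x. x \<notin> Xint \<Longrightarrow> s x = x" "finite (supp s)" "supp s \<subseteq> Xint"
    "bij s"
proof -
  show b: "bij_betw s Xint Xint" and o: "\<And>x. x \<notin> Xint \<Longrightarrow> s x = x" "finite (supp s)"
    using assms unfolding Sfin_def supp_def by auto
  show "supp s \<subseteq> Xint" using o unfolding supp_def by blast
  show "bij s" using bijX_bij[OF b o(1)] .
qed

lemma Sfin_PC: "s \<in> Sfin \<Longrightarrow> s \<in> PC_carrier"
proof -
  assume s: "s \<in> Sfin"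
  note sd = Sfin_D[OF s]
  have "\<forall>x\<in>Xint - supp s. continuous (at x within Xint) s"
  proof
    fix x assume "x \<in> Xint - supp s"
    hence "isCont s x" using isCont_fin_supp[OF sd(3), of s x] unfolding supp_def by auto
    thus "continuous (at x within Xint) s" using continuous_at_imp_continuous_within by blast
  qed
  thus ?thesis unfolding PC_carrier_def using sd by blast
qed

lemma Sfin_permutes: "s \<in> Sfin \<Longrightarrow> s permutes (supp s)" "s \<in> Sfin \<Longrightarrow> permutation s"
proof -
  assume s: "s \<in> Sfin"
  note sd = Sfin_D[OF s]
  show p: "s permutes (supp s)" unfolding permutes_def
  proof (intro conjI allI impI)
    fix x assume "x \<notin> supp s" thus "s x = x" unfolding supp_def by simp
  next
    fix y show "\<exists>!x. s x = y" using sd(5) unfolding bij_def inj_def surj_def by metis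
  qed
  show "permutation s" using p sd(3) permutation_permutes by blast
qed

lemma transpose_Sfin:
  assumes "a \<in> Xint" "b \<in> Xint"
  shows "Transposition.transpose a b \<in> Sfin"
proof -
  have p: "Transposition.transpose a b permutes Xint" using permutes_swap_id[OF assms] .
  have "{x. Transposition.transpose a b x \<noteq> x} \<subseteq> {a, b}"
  proof
    fix x assume "x \<in> {x. Transposition.transpose a b x \<noteq> x}"
    thus "x \<in> {a, b}" using transpose_apply_other[of x a b] by blast
  qed
  hence "finite {x. Transposition.transpose a b x \<noteq> x}" by (rule finite_subset) simp
  moreover have "\<forall>x. x \<notin> Xint \<longrightarrow> Transposition.transpose a b x = x"
  proof (intro allI impI)
    fix x assume "x \<notin> Xint"
    hence "x \<noteq> a" "x \<noteq> b" using assms by auto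
    thus "Transposition.transpose a b x = x" by (rule transpose_apply_other)
  qed
  ultimately show ?thesis unfolding Sfin_def mem_Collect_eq using permutes_imp_bij[OF p] by (intro conjI)
qed

lemma Sfin_comp: "s \<in> Sfin \<Longrightarrow> t \<in> Sfin \<Longrightarrow> s \<circ> t \<in> Sfin"
proof -
  assume s: "s \<in> Sfin" and t: "t \<in> Sfin"
  note sd = Sfin_D[OF s] and td = Sfin_D[OF t]
  have "{x. (s \<circ> t) x \<noteq> x} \<subseteq> supp s \<union> supp t" unfolding supp_def by auto
  hence "finite {x. (s \<circ> t) x \<noteq> x}" using sd(3) td(3) by (meson finite_UnI finite_subset)
  moreover have "bij_betw (s \<circ> t) Xint Xint" using bij_betw_trans[OF td(1) sd(1)] .
  moreover have "\<forall>x. x \<notin> Xint \<longrightarrow> (s \<circ> t) x = x" using sd(2) td(2) by simp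
  ultimately show ?thesis unfolding Sfin_def by blast
qed

lemma Sfin_inv: "s \<in> Sfin \<Longrightarrow> inv_into UNIV s \<in> Sfin"
proof -
  assume s: "s \<in> Sfin"
  note sd = Sfin_D[OF s]
  note ip = inv_props[OF sd(1) sd(2)]
  have "{x. inv_into UNIV s x \<noteq> x} \<subseteq> supp s"
  proof
    fix x assume x: "x \<in> {x. inv_into UNIV s x \<noteq> x}"
    show "x \<in> supp s"
    proof (rule ccontr)
      assume "x \<notin> supp s"
      hence "s x = x" unfolding supp_def by simp
      hence "inv_into UNIV s x = x" using sd(5) by (metis bij_inv_eq_iff)
      thus False using x by simp
    qed
  qed
  hence "finite {x. inv_into UNIV s x \<noteq> x}" using sd(3) by (rule finite_subset)
  thus ?thesis unfolding Sfin_def using ip(1,2) by blast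
qed

lemma Sfin_conj: "g \<in> PC_carrier \<Longrightarrow> s \<in> Sfin \<Longrightarrow> g \<circ> s \<circ> inv_into UNIV g \<in> Sfin"
proof -
  assume g: "g \<in> PC_carrier" and s: "s \<in> Sfin"
  note sd = Sfin_D[OF s]
  note gb = PC_basic[OF g]
  note ip = inv_props[OF gb(1) gb(2)]
  have "{x. (g \<circ> s \<circ> inv_into UNIV g) x \<noteq> x} \<subseteq> g ` supp s"
  proof
    fix y assume y: "y \<in> {x. (g \<circ> s \<circ> inv_into UNIV g) x \<noteq> x}"
    show "y \<in> g ` supp s"
    proof (rule ccontr)
      assume ny: "y \<notin> g ` supp s"
      have gy: "g (inv_into UNIV g y) = y" using ip(4) by (metis comp_apply id_apply)
      have "inv_into UNIV g y \<notin> supp s"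
      proof
        assume "inv_into UNIV g y \<in> supp s"
        hence "g (inv_into UNIV g y) \<in> g ` supp s" by (rule imageI)
        thus False using ny gy by simp
      qed
      hence "s (inv_into UNIV g y) = inv_into UNIV g y" unfolding supp_def by simp
      hence "(g \<circ> s \<circ> inv_into UNIV g) y = y" using gy by simp
      thus False using y by simp
    qed
  qed
  hence "finite {x. (g \<circ> s \<circ> inv_into UNIV g) x \<noteq> x}" using sd(3) by (meson finite_imageI finite_subset)
  moreover have "bij_betw (g \<circ> s \<circ> inv_into UNIV g) Xint Xint"
    using bij_betw_trans[OF bij_betw_trans[OF ip(1) sd(1)] gb(1)] by (simp add: comp_assoc)
  moreover have "\<forall>x. x \<notin> Xint \<longrightarrow> (g \<circ> s \<circ> inv_into UNIV g) x = x" using sd(2) gb(2) ip(2) by simp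
  ultimately show ?thesis unfolding Sfin_def by blast
qed

lemma Sfin_subgroup: "subgroup Sfin PC"
proof (rule group.subgroupI[OF group_PC])
  show "Sfin \<subseteq> carrier PC" using Sfin_PC by auto
  show "Sfin \<noteq> {}" using transpose_Sfin[of 0 0] by (auto simp: Xint_def)
  show "\<And>a. a \<in> Sfin \<Longrightarrow> inv\<^bsub>PC\<^esub> a \<in> Sfin" using PC_inv Sfin_PC Sfin_inv by simp
  show "\<And>a b. a \<in> Sfin \<Longrightarrow> b \<in> Sfin \<Longrightarrow> a \<otimes>\<^bsub>PC\<^esub> b \<in> Sfin" using Sfin_comp by simp
qed

lemma Sfin_normal: "Sfin \<lhd> PC"
  unfolding group.normal_inv_iff[OF group_PC]
  using Sfin_subgroup Sfin_conj PC_inv by simp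

lemma eps_Sfin:
  assumes s: "s \<in> Sfin"
  shows "epsilon s = sgn2 s"
proof -
  note sd = Sfin_D[OF s]
  have sPC: "s \<in> PC_carrier" using Sfin_PC[OF s] .
  define B where "B = insert 0 (supp s)"
  have BX: "B \<subseteq> Xint" using sd(4) unfolding B_def Xint_def by auto
  have finB: "finite B" using sd(3) unfolding B_def by simp
  have B: "assoc_partition s B"
    unfolding assoc_iff
  proof (intro conjI ballI)
    fix x assume "x \<in> Xint - B"
    hence "x \<notin> supp s" unfolding B_def by simp
    thus "isCont s x" using isCont_fin_supp[OF sd(3), of s x] unfolding supp_def by auto
  qed (use finB BX in \<open>auto simp: B_def\<close>)
  have idI: "s x = x" if "a \<in> B" "x \<in> Iv B a" for a x
  proof -
    have "x \<notin> B" using Iv_props(2)[OF B that(1)] that(2) by blast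
    thus ?thesis unfolding B_def supp_def by simp
  qed
  have imI: "s ` Iv B a = Iv B a" if "a \<in> B" for a
    using idI[OF that] by (simp add: image_cong[of _ _ s id])
  have Rc: "Rcount s B = 0"
  proof -
    have "\<not> strict_antimono_on {a<..<nextpt B a} s" if a: "a \<in> B" for a
    proof -
      have "strict_mono_on {a<..<nextpt B a} s"
        using idI[OF a] unfolding monotone_on_def Iv_def by simp
      thus ?thesis using not_both Iv_props(3)[OF B a] by blast
    qed
    hence "{a \<in> B. strict_antimono_on {a<..<nextpt B a} s} = {}" by blast
    thus ?thesis unfolding Rcount_def by (metis card.empty)
  qed
  have bet: "betapt s B a = a" if a: "a \<in> B" for a
  proof -
    have "betapt s B a = Inf (Iv B a)" unfolding betapt_def using imI[OF a] unfolding Iv_def by simp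
    thus ?thesis unfolding Iv_def using Iv_props(3)[OF B a] by simp
  qed
  have sB: "s ` B = B"
  proof (rule card_subset_eq)
    show "finite B" using finB .
    show "s ` B \<subseteq> B"
    proof
      fix y assume "y \<in> s ` B"
      then obtain b where b: "b \<in> B" "y = s b" by blast
      show "y \<in> B"
      proof (cases "s b = b")
        case True thus ?thesis using b by simp
      next
        case False
        have "s (s b) \<noteq> s b" using False sd(5) unfolding bij_def inj_def by metis
        thus ?thesis using b unfolding B_def supp_def by simp
      qed
    qed
    show "card (s ` B) = card B" using card_image sd(5) bij_is_inj inj_on_subset by (metis subset_UNIV)
  qed
  have sig: "sigma_part s B = inv_into UNIV s"
  proof
    fix y
    show "sigma_part s B y = inv_into UNIV s y"
    proof (cases "y \<in> B")
      case True
      hence ys: "y \<in> s ` B" using sB by simp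
      have x: "inv_into B s y \<in> B" "s (inv_into B s y) = y"
        using inv_into_into[OF ys] f_inv_into_f[OF ys] by auto
      have "inv_into UNIV s y = inv_into B s y"
        using inv_into_f_eq[OF bij_is_inj[OF sd(5)] _ x(2)] by simp
      moreover have "sigma_part s B y = inv_into B s y"
        unfolding sigma_part_def using ys bet[OF x(1)] by simp
      ultimately show ?thesis by simp
    next
      case False
      hence "y \<notin> s ` B" using sB by simp
      hence "sigma_part s B y = y" by (rule sigma_out)
      moreover have "s y = y" using False unfolding B_def supp_def by auto
      hence "inv_into UNIV s y = y" using sd(5) by (metis bij_inv_eq_iff)
      ultimately show ?thesis by simp
    qed
  qed
  have "epsilon s = eps_part s B" using epsilon_eq[OF sPC B] .
  also have "\<dots> = sgn2 s"
    unfolding eps_part_def Rc sig sgn2_def using evenperm_inv[OF Sfin_permutes(2)[OF s]] by simp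
  finally show ?thesis .
qed

lemma carrier_Z2: "carrier Z2 = {0, 1}"
  by (auto simp: carrier_integer_mod_group)

lemma eps_hom_Z2: "epsilon \<in> hom PC Z2"
proof (rule homI)
  fix x assume "x \<in> carrier PC"
  show "epsilon x \<in> carrier Z2" using eps_range carrier_Z2 by simp
next
  fix x y assume "x \<in> carrier PC" "y \<in> carrier PC"
  thus "epsilon (x \<otimes>\<^bsub>PC\<^esub> y) = epsilon x \<otimes>\<^bsub>Z2\<^esub> epsilon y"
    using eps_hom by simp
qed

lemma group_hom_eps: "group_hom PC Z2 epsilon"
  unfolding group_hom_def group_hom_axioms_def using group_PC eps_hom_Z2 by simp

lemma eps_id: "epsilon id = 0"
  using group_hom.hom_one[OF group_hom_eps] by simp

lemma eps_inv:
  assumes "g \<in> PC_carrier"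
  shows "epsilon (inv\<^bsub>PC\<^esub> g) = epsilon g"
proof -
  have ig: "inv\<^bsub>PC\<^esub> g \<in> PC_carrier" using group.inv_closed[OF group_PC] assms by simp
  have "g \<otimes>\<^bsub>PC\<^esub> inv\<^bsub>PC\<^esub> g = id" using group.r_inv[OF group_PC] assms by simp
  hence "g \<circ> inv\<^bsub>PC\<^esub> g = id" by simp
  hence "(epsilon g + epsilon (inv\<^bsub>PC\<^esub> g)) mod 2 = 0" using eps_hom[OF assms ig] eps_id by simp
  thus ?thesis using eps_range[of g] eps_range[of "inv\<^bsub>PC\<^esub> g"] by auto
qed

definition K0 :: "(real \<Rightarrow> real) set" where
  "K0 = {h \<in> carrier PC. epsilon h = 0}"

lemma K0_kernel: "K0 = kernel PC Z2 epsilon"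
  unfolding K0_def kernel_def by simp

lemma K0_subgroup: "subgroup K0 PC"
  unfolding K0_kernel using group_hom.subgroup_kernel[OF group_hom_eps] .

lemma derived_K0:
  assumes "Gh \<subseteq> carrier PC"
  shows "derived PC Gh \<subseteq> K0"
  unfolding derived_def
proof (rule group.generate_subgroup_incl[OF group_PC _ K0_subgroup])
  show "derived_set PC Gh \<subseteq> K0"
  proof
    fix x assume "x \<in> derived_set PC Gh"
    then obtain a b where ab: "a \<in> Gh" "b \<in> Gh"
      "x = a \<otimes>\<^bsub>PC\<^esub> b \<otimes>\<^bsub>PC\<^esub> inv\<^bsub>PC\<^esub> a \<otimes>\<^bsub>PC\<^esub> inv\<^bsub>PC\<^esub> b" by blast
    have a: "a \<in> PC_carrier" and b: "b \<in> PC_carrier" using ab assms by auto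
    have ia: "inv\<^bsub>PC\<^esub> a \<in> PC_carrier" and ib: "inv\<^bsub>PC\<^esub> b \<in> PC_carrier"
      using group.inv_closed[OF group_PC] a b by auto
    have x: "x = a \<circ> b \<circ> inv\<^bsub>PC\<^esub> a \<circ> inv\<^bsub>PC\<^esub> b" using ab by simp
    have xc: "x \<in> PC_carrier" using x PC_comp_closed a b ia ib by simp
    have "epsilon x = ((((epsilon a + epsilon b) mod 2 + epsilon a) mod 2) + epsilon b) mod 2"
      unfolding x using eps_hom PC_comp_closed a b ia ib eps_inv[OF a] eps_inv[OF b] by simp
    also have "\<dots> = 0" using eps_range[of a] eps_range[of b] by auto
    finally show "x \<in> K0" unfolding K0_def using xc by simp
  qed
qed

lemma conj_transpose:
  assumes "bij k"
  shows "k \<circ> Transposition.transpose a b \<circ> inv_into UNIV k = Transposition.transpose (k a) (k b)"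
proof -
  have ik: "inv_into UNIV k (k x) = x" for x using assms by (simp add: bij_is_inj)
  have "Transposition.transpose (k a) (k b) \<circ> k = k \<circ> Transposition.transpose a b"
    using transpose_comp_eq[OF assms, of "k a" "k b"] ik by simp
  hence "Transposition.transpose (k a) (k b) \<circ> k \<circ> inv_into UNIV k = k \<circ> Transposition.transpose a b \<circ> inv_into UNIV k"
    by simp
  moreover have "k \<circ> inv_into UNIV k = id" using assms by (metis bij_is_surj surj_iff)
  ultimately show ?thesis by (simp add: comp_assoc)
qed

lemma two_transp_derived:
  assumes Gh: "subgroup Gh PC" "Sfin \<subseteq> Gh"
    and X: "a \<in> Xint" "b \<in> Xint" "c \<in> Xint" "d \<in> Xint" "a \<noteq> b" "c \<noteq> d"
  shows "Transposition.transpose a b \<circ> Transposition.transpose c d \<in> derived PC Gh"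
proof -
  let ?t1 = "Transposition.transpose a b"
  define b' where "b' = Transposition.transpose a c b"
  define k where "k = Transposition.transpose b' d \<circ> Transposition.transpose a c"
  have b'X: "b' \<in> Xint" unfolding b'_def using X by (auto simp: Transposition.transpose_def)
  have b'c: "b' \<noteq> c" unfolding b'_def using X(5) by (auto simp: Transposition.transpose_def)
  have ka: "k a = c" unfolding k_def using b'c X(6) by (simp add: Transposition.transpose_def)
  have kb: "k b = d" unfolding k_def b'_def by (simp add: Transposition.transpose_def)
  have kS: "k \<in> Sfin" unfolding k_def using Sfin_comp transpose_Sfin b'X X by simp
  have t1S: "?t1 \<in> Sfin" using transpose_Sfin X by simp
  have kPC: "k \<in> PC_carrier" and t1PC: "?t1 \<in> PC_carrier" using Sfin_PC kS t1S by auto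
  have kbij: "bij k" using Sfin_D(5)[OF kS] .
  have "?t1 \<otimes>\<^bsub>PC\<^esub> k \<otimes>\<^bsub>PC\<^esub> inv\<^bsub>PC\<^esub> ?t1 \<otimes>\<^bsub>PC\<^esub> inv\<^bsub>PC\<^esub> k \<in> derived_set PC Gh"
    using kS t1S Gh(2) by blast
  hence "?t1 \<otimes>\<^bsub>PC\<^esub> k \<otimes>\<^bsub>PC\<^esub> inv\<^bsub>PC\<^esub> ?t1 \<otimes>\<^bsub>PC\<^esub> inv\<^bsub>PC\<^esub> k \<in> derived PC Gh"
    unfolding derived_def by (rule generate.incl)
  moreover have "?t1 \<otimes>\<^bsub>PC\<^esub> k \<otimes>\<^bsub>PC\<^esub> inv\<^bsub>PC\<^esub> ?t1 \<otimes>\<^bsub>PC\<^esub> inv\<^bsub>PC\<^esub> k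
      = ?t1 \<circ> (k \<circ> ?t1 \<circ> inv_into UNIV k)"
    using PC_inv[OF kPC] PC_inv[OF t1PC] by (simp add: comp_assoc)
  moreover have "k \<circ> ?t1 \<circ> inv_into UNIV k = Transposition.transpose c d"
    using conj_transpose[OF kbij] ka kb by simp
  ultimately show ?thesis by simp
qed

lemma even_Sfin_derived:
  assumes Gh: "subgroup Gh PC" "Sfin \<subseteq> Gh"
    and s: "s \<in> Sfin" "evenperm s"
  shows "s \<in> derived PC Gh"
proof -
  let ?D = "derived PC Gh"
  have Dsub: "subgroup ?D PC"
    using group.derived_is_subgroup[OF group_PC] subgroup.subset[OF Gh(1)] by blast
  have Dm: "x \<circ> y \<in> ?D" if "x \<in> ?D" "y \<in> ?D" for x y
    using subgroup.m_closed[OF Dsub that] by simp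
  define t0 where "t0 = Transposition.transpose (0::real) (1/2)"
  have X0: "(0::real) \<in> Xint" "(1/2::real) \<in> Xint" "(0::real) \<noteq> 1/2" by (auto simp: Xint_def)
  have t0t0: "t0 \<circ> t0 = id" unfolding t0_def by simp
  let ?S = "supp s"
  have perm: "s permutes ?S" using Sfin_permutes(1)[OF s(1)] .
  have SX: "?S \<subseteq> Xint" using Sfin_D(4)[OF s(1)] .
  have "(evenperm s \<longrightarrow> s \<in> ?D) \<and> (\<not> evenperm s \<longrightarrow> t0 \<circ> s \<in> ?D)"
    using perm Sfin_D(3)[OF s(1)]
  proof (induction rule: permutes_induct)
    case id
    then show ?case using subgroup.one_closed[OF Dsub] by (simp add: id_def)
  next
    case (swap a b p)
    have pp: "permutation p" using swap.hyps(4) Sfin_D(3)[OF s(1)] permutation_permutes by blast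
    have ev: "evenperm (Transposition.transpose a b \<circ> p) \<longleftrightarrow> \<not> evenperm p"
    proof -
      have "evenperm (Transposition.transpose a b) = False" using evenperm_swap[of a b] swap.hyps(3) by simp
      thus ?thesis using evenperm_comp[OF permutation_swap_id pp, of a b] by simp
    qed
    have abX: "a \<in> Xint" "b \<in> Xint" using swap.hyps(1,2) SX by auto
    show ?case
    proof (cases "evenperm p")
      case True
      hence pD: "p \<in> ?D" using swap.IH by simp
      have "t0 \<circ> Transposition.transpose a b \<in> ?D"
        unfolding t0_def using two_transp_derived[OF Gh X0(1,2) abX X0(3) swap.hyps(3)] .
      hence "(t0 \<circ> Transposition.transpose a b) \<circ> p \<in> ?D" using Dm[OF _ pD] by blast
      hence "t0 \<circ> (Transposition.transpose a b \<circ> p) \<in> ?D" by (simp add: comp_assoc)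
      then show ?thesis using ev True by blast
    next
      case False
      hence pD: "t0 \<circ> p \<in> ?D" using swap.IH by blast
      have "Transposition.transpose a b \<circ> t0 \<in> ?D"
        unfolding t0_def using two_transp_derived[OF Gh abX X0(1,2) swap.hyps(3) X0(3)] .
      hence "(Transposition.transpose a b \<circ> t0) \<circ> (t0 \<circ> p) \<in> ?D" using Dm[OF _ pD] by blast
      moreover have "(Transposition.transpose a b \<circ> t0) \<circ> (t0 \<circ> p) = Transposition.transpose a b \<circ> p"
      proof -
        have "(Transposition.transpose a b \<circ> t0) \<circ> (t0 \<circ> p) = Transposition.transpose a b \<circ> (t0 \<circ> t0) \<circ> p"
          by (simp add: comp_assoc)
        thus ?thesis using t0t0 by simp
      qed
      ultimately show ?thesis using ev False by metis
    qed
  qed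
  thus ?thesis using s(2) by simp
qed

definition pr :: "(real \<Rightarrow> real) \<Rightarrow> (real \<Rightarrow> real) set" where
  "pr g = Sfin #>\<^bsub>PC\<^esub> g"

abbreviation MM :: "(real \<Rightarrow> real) set monoid" where
  "MM \<equiv> PC Mod Sfin"

lemma group_MM: "group MM"
  using normal.factorgroup_is_group[OF Sfin_normal] .

lemma pr_hom: "pr \<in> hom PC MM"
  unfolding pr_def using normal.r_coset_hom_Mod[OF Sfin_normal] .

lemma group_hom_pr: "group_hom PC MM pr"
  unfolding group_hom_def group_hom_axioms_def using group_PC group_MM pr_hom by simp

lemma one_MM: "\<one>\<^bsub>MM\<^esub> = Sfin" unfolding FactGroup_def by simp

lemma pr_Sfin: "s \<in> Sfin \<Longrightarrow> pr s = Sfin"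
  unfolding pr_def using subgroup.rcos_const[OF Sfin_subgroup group_PC] by simp

lemma pr_mult: "x \<in> PC_carrier \<Longrightarrow> y \<in> PC_carrier \<Longrightarrow> pr (x \<circ> y) = pr x \<otimes>\<^bsub>MM\<^esub> pr y"
  using group_hom.hom_mult[OF group_hom_pr] by simp

lemma pr_carrier: "x \<in> PC_carrier \<Longrightarrow> pr x \<in> carrier MM"
  using group_hom.hom_closed[OF group_hom_pr] by simp

lemma pr_right: "x \<in> PC_carrier \<Longrightarrow> s \<in> Sfin \<Longrightarrow> pr (x \<circ> s) = pr x"
proof -
  assume x: "x \<in> PC_carrier" and s: "s \<in> Sfin"
  have "pr (x \<circ> s) = pr x \<otimes>\<^bsub>MM\<^esub> \<one>\<^bsub>MM\<^esub>" using pr_mult[OF x Sfin_PC[OF s]] pr_Sfin[OF s] one_MM by simp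
  also have "\<dots> = pr x" using monoid.r_one[OF group.is_monoid[OF group_MM] pr_carrier[OF x]] .
  finally show ?thesis .
qed

lemma pr_eq:
  assumes "x \<in> PC_carrier" "c \<in> PC_carrier" "pr x = pr c"
  shows "\<exists>s\<in>Sfin. x = s \<circ> c"
proof -
  have "x \<in> Sfin #>\<^bsub>PC\<^esub> x" using group.rcos_self[OF group_PC _ Sfin_subgroup] assms(1) by simp
  hence "x \<in> Sfin #>\<^bsub>PC\<^esub> c" using assms(3) unfolding pr_def by simp
  thus ?thesis unfolding r_coset_def by auto
qed

lemma r_coset_upd: "H #>\<^bsub>PC\<lparr>carrier := A\<rparr>\<^esub> a = H #>\<^bsub>PC\<^esub> a"
  unfolding r_coset_def by simp

lemma t0_facts:
  defines "t0 \<equiv> Transposition.transpose (0::real) (1/2)"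
  shows "t0 \<in> Sfin" "epsilon t0 = 1" "t0 \<in> PC_carrier"
proof -
  show t: "t0 \<in> Sfin" unfolding t0_def by (rule transpose_Sfin) (auto simp: Xint_def)
  have "\<not> evenperm t0" unfolding t0_def using evenperm_swap[of "0::real" "1/2"] by simp
  thus "epsilon t0 = 1" using eps_Sfin[OF t] unfolding sgn2_def by simp
  show "t0 \<in> PC_carrier" using Sfin_PC[OF t] .
qed

locale CS =
  fixes Gh :: "(real \<Rightarrow> real) set"
  assumes sg: "subgroup Gh PC" and SG: "Sfin \<subseteq> Gh"
begin

abbreviation "Ghat \<equiv> PC\<lparr>carrier := Gh\<rparr>"
abbreviation "GG \<equiv> image_grp Gh"
abbreviation "DD \<equiv> derived PC Gh"
abbreviation "DG \<equiv> derived GG (carrier GG)"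

lemma Gh_PC: "Gh \<subseteq> PC_carrier" using subgroup.subset[OF sg] by simp

lemma group_Ghat: "group Ghat" using subgroup.subgroup_is_group[OF sg group_PC] .

lemma GG_eq: "GG = MM\<lparr>carrier := pr ` Gh\<rparr>" unfolding image_grp_def pr_def ..

lemma carrier_GG: "carrier GG = pr ` Gh" unfolding GG_eq by simp

lemma sub_GG: "subgroup (pr ` Gh) MM"
  using group_hom.subgroup_img_is_subgroup[OF group_hom_pr sg] .

lemma group_GG: "group GG" unfolding GG_eq using subgroup.subgroup_is_group[OF sub_GG group_MM] .

lemma mult_GG: "x \<otimes>\<^bsub>GG\<^esub> y = x \<otimes>\<^bsub>MM\<^esub> y" unfolding GG_eq by simp

lemma one_GG: "\<one>\<^bsub>GG\<^esub> = Sfin" unfolding GG_eq by (simp add: FactGroup_def)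

lemma derived_Ghat: "derived Ghat Gh = DD"
  using group.derived_consistent[OF group_PC _ sg] by simp

lemma DD_sub: "subgroup DD PC"
  using group.derived_is_subgroup[OF group_PC] Gh_PC by simp

lemma DD_Gh: "DD \<subseteq> Gh"
  using group.derived_incl[OF group_PC _ sg] by simp

lemma DG_eq: "DG = pr ` DD"
proof -
  have "DG = derived MM (pr ` Gh)"
    unfolding carrier_GG GG_eq using group.derived_consistent[OF group_MM _ sub_GG] by simp
  also have "\<dots> = pr ` DD"
    using group_hom.derived_img[OF group_hom_pr] Gh_PC by simp
  finally show ?thesis .
qed

lemma DG_sub: "subgroup DG GG"
  using group.derived_is_subgroup[OF group_GG] by simp

lemma DG_normal: "DG \<lhd> GG"
  using group.derived_self_is_normal[OF group_GG] .

lemma hat_DG: "hat_derived Gh = {g \<in> PC_carrier. pr g \<in> DG}"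
  unfolding hat_derived_def pr_def by simp

lemma Sfin_hat: "s \<in> Sfin \<Longrightarrow> s \<in> hat_derived Gh"
  unfolding hat_DG using pr_Sfin Sfin_PC subgroup.one_closed[OF DG_sub] one_GG by simp

theorem partA: "DD = K0 \<inter> hat_derived Gh"
proof
  show "DD \<subseteq> K0 \<inter> hat_derived Gh"
  proof
    fix x assume x: "x \<in> DD"
    have xc: "x \<in> PC_carrier" using x DD_Gh Gh_PC by blast
    have "x \<in> K0" using derived_K0 Gh_PC x by simp blast
    moreover have "pr x \<in> DG" using DG_eq x by simp
    ultimately show "x \<in> K0 \<inter> hat_derived Gh" unfolding hat_DG using xc by simp
  qed
next
  show "K0 \<inter> hat_derived Gh \<subseteq> DD"
  proof
    fix x assume x: "x \<in> K0 \<inter> hat_derived Gh"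
    have xc: "x \<in> PC_carrier" and ex: "epsilon x = 0" and px: "pr x \<in> DG"
      using x unfolding K0_def hat_DG by auto
    obtain c where c: "c \<in> DD" "pr x = pr c" using px DG_eq by auto
    have cc: "c \<in> PC_carrier" using c DD_Gh Gh_PC by blast
    have ec: "epsilon c = 0" using derived_K0 Gh_PC c(1) unfolding K0_def by auto
    obtain s where s: "s \<in> Sfin" "x = s \<circ> c" using pr_eq[OF xc cc c(2)] by blast
    have "epsilon x = (epsilon s + epsilon c) mod 2" using s eps_hom Sfin_PC cc by simp
    hence "epsilon s = 0" using ex ec eps_range[of s] by auto
    hence "evenperm s" using eps_Sfin[OF s(1)] unfolding sgn2_def by (auto split: if_splits)
    hence sD: "s \<in> DD" using even_Sfin_derived[OF sg SG s(1)] by simp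
    have "s \<otimes>\<^bsub>PC\<^esub> c \<in> DD" using subgroup.m_closed[OF DD_sub sD c(1)] .
    thus "x \<in> DD" using s by simp
  qed
qed

end


lemma id_Sfin: "id \<in> Sfin"
  unfolding Sfin_def by (simp add: bij_betw_def)

lemma (in CS) id_DD: "id \<in> DD"
  using subgroup.one_closed[OF DD_sub] by simp

lemma (in CS) DD_K0: "DD \<subseteq> K0"
  using derived_K0 Gh_PC by simp

theorem (in CS) partB: "card (rcosets\<^bsub>PC\<lparr>carrier := hat_derived Gh\<rparr>\<^esub> DD) = 2"
proof -
  let ?H = "hat_derived Gh"
  define t0 where "t0 = Transposition.transpose (0::real) (1/2)"
  note t0f = t0_facts[folded t0_def]
  have R: "rcosets\<^bsub>PC\<lparr>carrier := ?H\<rparr>\<^esub> DD = (\<Union>a\<in>?H. {DD #>\<^bsub>PC\<^esub> a})"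
    unfolding RCOSETS_def r_coset_upd by simp
  have t0H: "t0 \<in> ?H" using Sfin_hat t0f(1) by simp
  have idH: "id \<in> ?H" using Sfin_hat id_Sfin by simp
  have Did: "DD #>\<^bsub>PC\<^esub> id = DD" using subgroup.rcos_const[OF DD_sub group_PC id_DD] .
  have t0t0: "t0 \<circ> t0 = id" unfolding t0_def by simp
  have cases: "DD #>\<^bsub>PC\<^esub> a \<in> {DD, DD #>\<^bsub>PC\<^esub> t0}" if a: "a \<in> ?H" for a
  proof -
    have ac: "a \<in> PC_carrier" using a unfolding hat_DG by simp
    show ?thesis
    proof (cases "epsilon a = 0")
      case True
      hence "a \<in> DD" using partA a ac unfolding K0_def by simp
      thus ?thesis using subgroup.rcos_const[OF DD_sub group_PC] by simp
    next
      case False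
      hence ea: "epsilon a = 1" using eps_range[of a] by simp
      define b where "b = a \<circ> t0"
      have bc: "b \<in> PC_carrier" unfolding b_def using PC_comp_closed[OF t0f(3) ac] .
      have "pr b = pr a" unfolding b_def using pr_right[OF ac t0f(1)] .
      hence bH: "b \<in> ?H" using a bc unfolding hat_DG by simp
      have "epsilon b = 0" unfolding b_def using eps_hom[OF ac t0f(3)] ea t0f(2) by simp
      hence bD: "b \<in> DD" using partA bH bc unfolding K0_def by simp
      have ab: "a = b \<circ> t0" unfolding b_def using t0t0 by (simp add: comp_assoc)
      have "a \<in> DD #>\<^bsub>PC\<^esub> t0" unfolding r_coset_def using bD ab by auto
      hence "DD #>\<^bsub>PC\<^esub> t0 = DD #>\<^bsub>PC\<^esub> a"
        using group.repr_independence[OF group_PC _ _ DD_sub] t0f(3) by simp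
      thus ?thesis by simp
    qed
  qed
  have set: "rcosets\<^bsub>PC\<lparr>carrier := ?H\<rparr>\<^esub> DD = {DD, DD #>\<^bsub>PC\<^esub> t0}"
  proof (rule Set.set_eqI, rule iffI)
    fix Xs assume "Xs \<in> rcosets\<^bsub>PC\<lparr>carrier := ?H\<rparr>\<^esub> DD"
    then obtain a where "a \<in> ?H" "Xs = DD #>\<^bsub>PC\<^esub> a" unfolding R by blast
    thus "Xs \<in> {DD, DD #>\<^bsub>PC\<^esub> t0}" using cases by simp
  next
    fix Xs assume "Xs \<in> {DD, DD #>\<^bsub>PC\<^esub> t0}"
    thus "Xs \<in> rcosets\<^bsub>PC\<lparr>carrier := ?H\<rparr>\<^esub> DD" unfolding R using t0H idH Did by auto
  qed
  have "t0 \<in> DD #>\<^bsub>PC\<^esub> t0" using group.rcos_self[OF group_PC _ DD_sub] t0f(3) by simp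
  moreover have "t0 \<notin> DD" using DD_K0 t0f(2) unfolding K0_def by auto
  ultimately have "DD \<noteq> DD #>\<^bsub>PC\<^esub> t0" by blast
  thus ?thesis unfolding set by simp
qed

lemma (in CS) rcos_DG_iff:
  assumes "y \<in> carrier GG"
  shows "DG #>\<^bsub>GG\<^esub> y = DG \<longleftrightarrow> y \<in> DG"
proof
  assume "DG #>\<^bsub>GG\<^esub> y = DG"
  moreover have "y \<in> DG #>\<^bsub>GG\<^esub> y" using group.rcos_self[OF group_GG assms DG_sub] .
  ultimately show "y \<in> DG" by simp
next
  assume "y \<in> DG"
  thus "DG #>\<^bsub>GG\<^esub> y = DG" using subgroup.rcos_const[OF DG_sub group_GG] by simp
qed

theorem (in CS) partC:
  "\<exists>\<phi>. \<phi> \<in> iso (Ghat Mod derived Ghat Gh) ((GG Mod DG) \<times>\<times> Z2) \<and>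
     (\<forall>g \<in> Gh. fst (\<phi> (derived Ghat Gh #>\<^bsub>Ghat\<^esub> g)) = DG #>\<^bsub>GG\<^esub> (Sfin #>\<^bsub>PC\<^esub> g))"
proof -
  define Phi where "Phi = (\<lambda>g. (DG #>\<^bsub>GG\<^esub> pr g, epsilon g))"
  let ?T = "(GG Mod DG) \<times>\<times> Z2"
  define t0 where "t0 = Transposition.transpose (0::real) (1/2)"
  note t0f = t0_facts[folded t0_def]
  have gQ: "group (GG Mod DG)" using normal.factorgroup_is_group[OF DG_normal] .
  have gT: "group ?T" using DirProd_group[OF gQ group_integer_mod_group] .
  have prG: "pr g \<in> carrier GG" if "g \<in> Gh" for g using that carrier_GG by simp
  have hom: "Phi \<in> hom Ghat ?T"
  proof (rule homI)
    fix g assume g: "g \<in> carrier Ghat"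
    hence gG: "g \<in> Gh" by simp
    have "DG #>\<^bsub>GG\<^esub> pr g \<in> carrier (GG Mod DG)"
      unfolding FactGroup_def RCOSETS_def using prG[OF gG] by auto
    moreover have "epsilon g \<in> carrier Z2" using eps_range carrier_Z2 by simp
    ultimately show "Phi g \<in> carrier ?T" unfolding Phi_def by simp
  next
    fix g h assume "g \<in> carrier Ghat" "h \<in> carrier Ghat"
    hence g: "g \<in> Gh" and h: "h \<in> Gh" by simp_all
    have gc: "g \<in> PC_carrier" and hc: "h \<in> PC_carrier" using g h Gh_PC by auto
    have "DG #>\<^bsub>GG\<^esub> pr (g \<circ> h) = DG #>\<^bsub>GG\<^esub> (pr g \<otimes>\<^bsub>GG\<^esub> pr h)"
      using pr_mult[OF gc hc] mult_GG by simp
    also have "\<dots> = (DG #>\<^bsub>GG\<^esub> pr g) <#>\<^bsub>GG\<^esub> (DG #>\<^bsub>GG\<^esub> pr h)"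
      using normal.rcos_sum[OF DG_normal prG[OF g] prG[OF h]] by simp
    finally have e1: "DG #>\<^bsub>GG\<^esub> pr (g \<circ> h) = (DG #>\<^bsub>GG\<^esub> pr g) \<otimes>\<^bsub>GG Mod DG\<^esub> (DG #>\<^bsub>GG\<^esub> pr h)"
      unfolding FactGroup_def by simp
    show "Phi (g \<otimes>\<^bsub>Ghat\<^esub> h) = Phi g \<otimes>\<^bsub>?T\<^esub> Phi h"
      unfolding Phi_def using e1 eps_hom[OF gc hc] by simp
  qed
  have ghom: "group_hom Ghat ?T Phi"
    unfolding group_hom_def group_hom_axioms_def using group_Ghat gT hom by simp
  have surj: "Phi ` carrier Ghat = carrier ?T"
  proof
    show "Phi ` carrier Ghat \<subseteq> carrier ?T"
    proof
      fix z assume "z \<in> Phi ` carrier Ghat"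
      then obtain g where g: "g \<in> carrier Ghat" "z = Phi g" by blast
      show "z \<in> carrier ?T" using group_hom.hom_closed[OF ghom g(1)] g(2) by simp
    qed
  next
    show "carrier ?T \<subseteq> Phi ` carrier Ghat"
    proof
      fix z assume z: "z \<in> carrier ?T"
      then obtain Xs e where Xe: "z = (Xs, e)" "Xs \<in> carrier (GG Mod DG)" "e \<in> {0, 1}"
        using carrier_Z2 by (cases z) auto
      obtain y where y: "y \<in> carrier GG" "Xs = DG #>\<^bsub>GG\<^esub> y"
        using Xe(2) unfolding FactGroup_def RCOSETS_def by auto
      obtain g where g: "g \<in> Gh" "y = pr g" using y(1) carrier_GG by auto
      have gc: "g \<in> PC_carrier" using g Gh_PC by auto
      show "z \<in> Phi ` carrier Ghat"
      proof (cases "epsilon g = e")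
        case True
        then have "Phi g = z" unfolding Phi_def using Xe y g by simp
        then show ?thesis using g by force
      next
        case False
        define g' where "g' = g \<circ> t0"
        have g'G: "g' \<in> Gh" unfolding g'_def
          using subgroup.m_closed[OF sg, of g t0] g t0f(1) SG by auto
        have "pr g' = pr g" unfolding g'_def using pr_right[OF gc t0f(1)] .
        moreover have "epsilon g' = e" unfolding g'_def using eps_hom[OF gc t0f(3)] t0f(2) False Xe(3)
          eps_range[of g] by auto
        ultimately have "Phi g' = z" unfolding Phi_def using Xe y g by simp
        then show ?thesis using g'G by force
      qed
    qed
  qed
  have ker: "kernel Ghat ?T Phi = DD"
  proof -
    have one: "\<one>\<^bsub>?T\<^esub> = (DG, 0)" by (simp add: FactGroup_def)
    have "kernel Ghat ?T Phi = {g \<in> Gh. pr g \<in> DG \<and> epsilon g = 0}"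
      unfolding kernel_def one Phi_def using rcos_DG_iff prG by auto
    also have "\<dots> = DD"
    proof (rule Set.set_eqI, rule iffI)
      fix g assume "g \<in> {g \<in> Gh. pr g \<in> DG \<and> epsilon g = 0}"
      hence "g \<in> K0 \<inter> hat_derived Gh" unfolding K0_def hat_DG using Gh_PC by auto
      thus "g \<in> DD" using partA by simp
    next
      fix g assume g: "g \<in> DD"
      hence "g \<in> K0 \<inter> hat_derived Gh" using partA by simp
      thus "g \<in> {g \<in> Gh. pr g \<in> DG \<and> epsilon g = 0}" unfolding K0_def hat_DG using g DD_Gh by auto
    qed
    finally show ?thesis .
  qed
  have iso: "(\<lambda>Xs. the_elem (Phi ` Xs)) \<in> iso (Ghat Mod DD) ?T"
    using group_hom.FactGroup_iso_set[OF ghom surj] unfolding ker .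
  have compat: "fst (the_elem (Phi ` (DD #>\<^bsub>Ghat\<^esub> g))) = DG #>\<^bsub>GG\<^esub> (Sfin #>\<^bsub>PC\<^esub> g)" if g: "g \<in> Gh" for g
  proof -
    have "Phi ` (DD #>\<^bsub>Ghat\<^esub> g) = {Phi g}"
    proof
      show "Phi ` (DD #>\<^bsub>Ghat\<^esub> g) \<subseteq> {Phi g}"
      proof
        fix z assume "z \<in> Phi ` (DD #>\<^bsub>Ghat\<^esub> g)"
        then obtain k where k: "k \<in> DD" "z = Phi (k \<otimes>\<^bsub>Ghat\<^esub> g)" unfolding r_coset_def by auto
        have kG: "k \<in> carrier Ghat" using k DD_Gh by auto
        have gG: "g \<in> carrier Ghat" using g by simp
        have "Phi k = \<one>\<^bsub>?T\<^esub>" using k ker unfolding kernel_def by auto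
        hence "z = \<one>\<^bsub>?T\<^esub> \<otimes>\<^bsub>?T\<^esub> Phi g" using k(2) group_hom.hom_mult[OF ghom kG gG] by simp
        also have "\<dots> = Phi g" using monoid.l_one[OF group.is_monoid[OF gT] group_hom.hom_closed[OF ghom gG]] by simp
        finally show "z \<in> {Phi g}" by simp
      qed
    next
      have e: "id \<otimes>\<^bsub>Ghat\<^esub> g = g" by simp
      have "g \<in> DD #>\<^bsub>Ghat\<^esub> g" unfolding r_coset_def using id_DD e by (metis UN_iff singletonI)
      thus "{Phi g} \<subseteq> Phi ` (DD #>\<^bsub>Ghat\<^esub> g)" by blast
    qed
    thus ?thesis unfolding Phi_def pr_def by simp
  qed
  show ?thesis
    apply (rule exI[of _ "\<lambda>Xs. the_elem (Phi ` Xs)"])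
    unfolding derived_Ghat using iso compat by blast
qed

theorem (in CS) partD:
  assumes "DG = carrier GG"
  shows "Ghat Mod derived Ghat Gh \<cong> Z2"
proof -
  define t0 where "t0 = Transposition.transpose (0::real) (1/2)"
  note t0f = t0_facts[folded t0_def]
  have hom: "epsilon \<in> hom Ghat Z2"
    using eps_hom_Z2 Gh_PC unfolding hom_def by auto
  have ghom: "group_hom Ghat Z2 epsilon"
    unfolding group_hom_def group_hom_axioms_def using group_Ghat hom by simp
  have idG: "id \<in> Gh" using subgroup.one_closed[OF sg] by simp
  have surj: "epsilon ` carrier Ghat = carrier Z2"
  proof
    show "epsilon ` carrier Ghat \<subseteq> carrier Z2" using eps_range carrier_Z2 by auto
    have "0 \<in> epsilon ` Gh" using idG eps_id by force
    moreover have "1 \<in> epsilon ` Gh" using t0f(1,2) SG by force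
    ultimately show "carrier Z2 \<subseteq> epsilon ` carrier Ghat" using carrier_Z2 by auto
  qed
  have ker: "kernel Ghat Z2 epsilon = DD"
  proof (rule Set.set_eqI, rule iffI)
    fix g assume "g \<in> kernel Ghat Z2 epsilon"
    hence g: "g \<in> Gh" "epsilon g = 0" unfolding kernel_def by auto
    have "pr g \<in> DG" using assms carrier_GG g by simp
    hence "g \<in> K0 \<inter> hat_derived Gh" unfolding K0_def hat_DG using Gh_PC g by auto
    thus "g \<in> DD" using partA by simp
  next
    fix g assume g: "g \<in> DD"
    hence "g \<in> K0" using partA by simp
    thus "g \<in> kernel Ghat Z2 epsilon" unfolding kernel_def K0_def using g DD_Gh by auto
  qed
  show ?thesis using group_hom.FactGroup_iso[OF ghom surj] unfolding ker derived_Ghat .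
qed

theorem corollary4p2:
  fixes Gh :: "(real \<Rightarrow> real) set"
  assumes "subgroup Gh PC" and "Sfin \<subseteq> Gh"
  defines "Ghat \<equiv> PC\<lparr>carrier := Gh\<rparr>"
      and "G \<equiv> image_grp Gh"
      and "DGhat \<equiv> hat_derived Gh"
  shows "(\<exists>\<phi>. \<phi> \<in> iso (Ghat Mod derived Ghat Gh) ((G Mod derived G (carrier G)) \<times>\<times> Z2) \<and>
            (\<forall>g \<in> Gh. fst (\<phi> (derived Ghat Gh #>\<^bsub>Ghat\<^esub> g))
                       = derived G (carrier G) #>\<^bsub>G\<^esub> (Sfin #>\<^bsub>PC\<^esub> g)))
       \<and> derived Ghat Gh = {h \<in> carrier PC. epsilon h = 0} \<inter> DGhat
       \<and> card (rcosets\<^bsub>PC\<lparr>carrier := DGhat\<rparr>\<^esub> (derived Ghat Gh)) = 2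
       \<and> (derived G (carrier G) = carrier G \<longrightarrow> Ghat Mod derived Ghat Gh \<cong> Z2)"
proof -
  interpret CS Gh by (rule CS.intro[OF assms(1) assms(2)])
  have dG: "derived Ghat Gh = derived PC Gh" unfolding Ghat_def using derived_Ghat .
  show ?thesis
    unfolding Ghat_def G_def DGhat_def
    using partC partA[folded K0_def] partB partD derived_Ghat
    unfolding K0_def by simp
qed

end
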